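(* The expected time for SEMO and GSEMO to find the whole Pareto front on \textsc{OneMinMax} is $O(n\log n)$ when using the Non-Minimum Uniform at Random (NMUAR) parent selection scheme with either the crowding distance contribution or the hypervolume contribution with reference point $(-r,-r)$ for some $r\ge 1$.
   Context: Search space $\{0,1\}^n$; objectives maximised. $\textsc{OneMinMax}(x)=(\sum_ix_i,\,n-\sum_ix_i)$; every point is Pareto optimal and the Pareto front is $F^*=\{(i,n-i):0\le i\le n\}$. Dominance: $y$ dominates $x$ if $f_i(y)\ge f_i(x)$ for all $i$, strictly for some $i$; weakly dominates if $\ge$ in all. SEMO/GSEMO with diversity-based parent selection: start with uniform random $s$, $P=\{s\}$. Each iteration: compute the diversity score of each $x\in P$ w.r.t. $P$; choose a parent by the selection mechanism; create $s'$ by flipping one uniformly random bit (SEMO) or each bit independently with probability $1/n$ (GSEMO); if $s'$ is not dominated by any member of $P$, add it and remove all members weakly dominated by $s'$. Time = number of iterations until $f(P)=F^*$. NMUAR: if the individuals of $P$ do not all have the same diversity score, discard all individuals with the minimum score and select uniformly at random among the remaining ones; otherwise select uniformly at random from $P$. HVC with reference point $(r_1,r_2)$: sort population by increasing $f_1$ as $x_1,\dots,x_\mu$, set $f_1(x_0)=r_1$, $f_2(x_{\mu+1})=r_2$, $\mathrm{HVC}(x_i,P)=(f_1(x_i)-f_1(x_{i-1}))(f_2(x_i)-f_2(x_{i+1}))$. CDC: each point starts at 0; for each objective $m$, sort ascending by $f_m$, boundary points get $\infty$, intermediate $P[i]$ gets $+(f_m(P[i+1])-f_m(P[i-1]))/(f_m^{\max}-f_m^{\min})$,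 with $f_m^{\max},f_m^{\min}$ the max and min values of objective $m$. *)

theory Defs
  imports "HOL-Probability.Probability" "HOL-Library.List_Lexorder"
begin

(* Individuals: bitstrings of length n, represented as bool lists.
   Populations: finite sets of individuals.
   Bi-objective functions take values in real x real (both maximised). *)

type_synonym indiv = "bool list"
type_synonym pop = "bool list set"
type_synonym objf = "bool list \<Rightarrow> real \<times> real"

definition OneMinMax :: "nat \<Rightarrow> objf" where
  "OneMinMax n x = (real (count_list x True), real n - real (count_list x True))"

definition pareto_front_OMM :: "nat \<Rightarrow> (real \<times> real) set" where
  "pareto_front_OMM n = {(real i, real n - real i) | i. i \<le> n}"

definition dominates :: "objf \<Rightarrow> indiv \<Rightarrow> indiv \<Rightarrow> bool" where
  "dominates f y x \<longleftrightarrow> fst (f y) \<ge> fst (f x) \<and> snd (f y) \<ge> snd (f x)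
      \<and> (fst (f y) > fst (f x) \<or> snd (f y) > snd (f x))"

definition weakly_dominates :: "objf \<Rightarrow> indiv \<Rightarrow> indiv \<Rightarrow> bool" where
  "weakly_dominates f y x \<longleftrightarrow> fst (f y) \<ge> fst (f x) \<and> snd (f y) \<ge> snd (f x)"

definition update :: "objf \<Rightarrow> pop \<Rightarrow> indiv \<Rightarrow> pop" where
  "update f P s' = (if \<exists>z\<in>P. dominates f z s' then P
                    else insert s' {z\<in>P. \<not> weakly_dominates f s' z})"

(* position of x in a list (length of the list if absent) *)
fun pos_in :: "'a list \<Rightarrow> 'a \<Rightarrow> nat" where
  "pos_in [] x = 0"
| "pos_in (y # ys) x = (if y = x then 0 else Suc (pos_in ys x))"

(* population sorted ascending by objective component m (fst or snd);
   ties (which never occur in reachable populations) are broken lexicographically *)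
definition sorted_pop :: "objf \<Rightarrow> (real \<times> real \<Rightarrow> real) \<Rightarrow> pop \<Rightarrow> indiv list" where
  "sorted_pop f m P = sort_key (\<lambda>x. m (f x)) (sorted_list_of_set P)"

definition HVC :: "real \<times> real \<Rightarrow> objf \<Rightarrow> pop \<Rightarrow> indiv \<Rightarrow> ereal" where
  "HVC ref f P x =
    (let xs = sorted_pop f fst P; i = pos_in xs x; \<mu> = length xs;
         left = (if i = 0 then fst ref else fst (f (xs ! (i - 1))));
         right = (if i + 1 = \<mu> then snd ref else snd (f (xs ! (i + 1))))
     in ereal ((fst (f x) - left) * (snd (f x) - right)))"

definition CDC_obj :: "(real \<times> real \<Rightarrow> real) \<Rightarrow> objf \<Rightarrow> pop \<Rightarrow> indiv \<Rightarrow> ereal" where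
  "CDC_obj m f P x =
    (let xs = sorted_pop f m P; i = pos_in xs x; \<mu> = length xs
     in if i = 0 \<or> i + 1 = \<mu> then \<infinity>
        else ereal ((m (f (xs ! (i + 1))) - m (f (xs ! (i - 1))))
                    / (Max ((\<lambda>y. m (f y)) ` P) - Min ((\<lambda>y. m (f y)) ` P))))"

definition CDC :: "objf \<Rightarrow> pop \<Rightarrow> indiv \<Rightarrow> ereal" where
  "CDC f P x = CDC_obj fst f P x + CDC_obj snd f P x"

definition NMUAR :: "(pop \<Rightarrow> indiv \<Rightarrow> ereal) \<Rightarrow> pop \<Rightarrow> indiv pmf" where
  "NMUAR D P = (if \<exists>x\<in>P. \<exists>y\<in>P. D P x \<noteq> D P y
                then pmf_of_set {x\<in>P. D P x \<noteq> Min (D P ` P)}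
                else pmf_of_set P)"

fun flip_pmf :: "nat \<Rightarrow> nat \<Rightarrow> bool list pmf" where
  "flip_pmf n 0 = return_pmf []"
| "flip_pmf n (Suc k) = bind_pmf (bernoulli_pmf (1 / real n))
      (\<lambda>b. map_pmf (\<lambda>bs. b # bs) (flip_pmf n k))"

definition semo_mut :: "nat \<Rightarrow> indiv \<Rightarrow> indiv pmf" where
  "semo_mut n x = map_pmf (\<lambda>i. x[i := \<not> x ! i]) (pmf_of_set {..<n})"

definition gsemo_mut :: "nat \<Rightarrow> indiv \<Rightarrow> indiv pmf" where
  "gsemo_mut n x = map_pmf (\<lambda>bs. map2 (\<noteq>) x bs) (flip_pmf n n)"

definition semo_step :: "objf \<Rightarrow> (indiv \<Rightarrow> indiv pmf) \<Rightarrow> (pop \<Rightarrow> indiv \<Rightarrow> ereal)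
                          \<Rightarrow> pop \<Rightarrow> pop pmf" where
  "semo_step f mut D P = bind_pmf (NMUAR D P) (\<lambda>x. map_pmf (update f P) (mut x))"

fun trajectory :: "nat \<Rightarrow> (nat \<Rightarrow> indiv \<Rightarrow> indiv pmf) \<Rightarrow> (objf \<Rightarrow> pop \<Rightarrow> indiv \<Rightarrow> ereal)
                     \<Rightarrow> nat \<Rightarrow> pop list pmf" where
  "trajectory n mut D 0 = map_pmf (\<lambda>s. [{s}]) (pmf_of_set {xs. length xs = n})"
| "trajectory n mut D (Suc t) = bind_pmf (trajectory n mut D t)
      (\<lambda>ps. map_pmf (\<lambda>P'. ps @ [P'])
               (semo_step (OneMinMax n) (mut n) (D (OneMinMax n)) (last ps)))"

definition covers_front :: "nat \<Rightarrow> pop \<Rightarrow> bool" where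
  "covers_front n P \<longleftrightarrow> OneMinMax n ` P = pareto_front_OMM n"

(* expected number of iterations T until f(P_T) = F^*:  E[T] = sum_{t>=0} Pr[T > t] *)
definition expected_time :: "nat \<Rightarrow> (nat \<Rightarrow> indiv \<Rightarrow> indiv pmf)
                                \<Rightarrow> (objf \<Rightarrow> pop \<Rightarrow> indiv \<Rightarrow> ereal) \<Rightarrow> ennreal" where
  "expected_time n mut D =
     (\<Sum>t. ennreal (measure_pmf.prob (trajectory n mut D t)
                     {ps. \<forall>P\<in>set ps. \<not> covers_front n P}))"

end

theory Submission
  imports Defs
begin

abbreviation cnt :: "bool list \<Rightarrow> nat" where "cnt x \<equiv> count_list x True"

lemma cnt_card: "cnt x = card {i. i < length x \<and> x ! i}"
  by (simp add: count_list_eq_length_filter length_filter_conv_card eq_commute)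

lemma cnt_le: "cnt x \<le> length x"
  by (rule count_le_length)

lemma update_OMM: "update (OneMinMax n) P s' = insert s' {z\<in>P. cnt z \<noteq> cnt s'}"
  unfolding update_def dominates_def weakly_dominates_def OneMinMax_def by auto

lemma cnt_flip:
  assumes "i < length x"
  shows "cnt (x[i := \<not> x ! i]) = (if x ! i then cnt x - 1 else cnt x + 1)"
proof -
  have x: "x = take i x @ x ! i # drop (Suc i) x" using assms by (simp add: id_take_nth_drop)
  have "cnt x = cnt (take i x) + (if x ! i then 1 else 0) + cnt (drop (Suc i) x)"
    by (subst x) (simp add: count_list_append)
  moreover have "cnt (x[i := \<not> x ! i]) = cnt (take i x) + (if x ! i then 0 else 1) + cnt (drop (Suc i) x)"
    using assms by (simp add: upd_conv_take_nth_drop count_list_append)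
  ultimately show ?thesis by auto
qed

definition ones :: "bool list \<Rightarrow> nat set" where "ones x = {i. i < length x \<and> x ! i}"
definition zeros :: "bool list \<Rightarrow> nat set" where "zeros x = {i. i < length x \<and> \<not> x ! i}"

lemma card_ones: "card (ones x) = cnt x" by (simp add: ones_def cnt_card)
lemma card_zeros: "card (zeros x) = length x - cnt x"
proof -
  have "ones x \<union> zeros x = {..<length x}" "ones x \<inter> zeros x = {}" by (auto simp: ones_def zeros_def)
  hence "card (ones x) + card (zeros x) = length x"
    by (metis card_Un_disjoint card_lessThan finite_Un finite_lessThan)
  thus ?thesis by (simp add: card_ones)
qed

lemma cnt_flip_cases:
  assumes "i < length x"
  shows "cnt (x[i := \<not> x ! i]) = cnt x + 1 \<or> cnt (x[i := \<not> x ! i]) + 1 = cnt x"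
proof (cases "x ! i")
  case True
  have "cnt x \<ge> 1" using assms True by (auto simp: cnt_card intro!: Suc_leI card_gt_0_iff[THEN iffD2])
  then show ?thesis using cnt_flip[OF assms] True by auto
next
  case False
  then show ?thesis using cnt_flip[OF assms] by auto
qed

lemma semo_set: "n > 0 \<Longrightarrow> length x = n \<Longrightarrow> s' \<in> set_pmf (semo_mut n x) \<Longrightarrow>
    length s' = n \<and> (cnt s' = cnt x + 1 \<or> cnt s' + 1 = cnt x)"
proof -
  assume a: "n > 0" "length x = n" "s' \<in> set_pmf (semo_mut n x)"
  then obtain i where "i < n" "s' = x[i := \<not> x ! i]"
    unfolding semo_mut_def using a by (auto simp: set_pmf_of_set lessThan_empty_iff)
  thus ?thesis using cnt_flip_cases[of i x] a by auto
qed

lemma semo_prob: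
  assumes "n > 0" "length x = n"
  shows "measure_pmf.prob (semo_mut n x) {s'. cnt s' = v} = real (card {i. i < n \<and> cnt (x[i := \<not> x ! i]) = v}) / real n"
proof -
  have "{..<n} \<inter> {i. cnt (x[i := \<not> x ! i]) = v} = {i. i < n \<and> cnt (x[i := \<not> x ! i]) = v}" by auto
  thus ?thesis unfolding semo_mut_def using assms
    by (simp add: measure_pmf_of_set[of "{..<n}"] lessThan_empty_iff vimage_def)
qed

lemma semo_down: "n > 0 \<Longrightarrow> length x = n \<Longrightarrow> measure_pmf.prob (semo_mut n x) {s'. cnt s' = cnt x - 1} \<ge> real (cnt x) / real n"
proof -
  assume a: "n > 0" "length x = n"
  have "ones x \<subseteq> {i. i < n \<and> cnt (x[i := \<not> x ! i]) = cnt x - 1}"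
  proof
    fix i assume "i \<in> ones x"
    thus "i \<in> {i. i < n \<and> cnt (x[i := \<not> x ! i]) = cnt x - 1}"
      using a cnt_flip[of i x] by (auto simp: ones_def)
  qed
  hence "card (ones x) \<le> card {i. i < n \<and> cnt (x[i := \<not> x ! i]) = cnt x - 1}"
    by (intro card_mono) auto
  thus ?thesis using a by (simp add: semo_prob card_ones divide_right_mono)
qed

lemma semo_up: "n > 0 \<Longrightarrow> length x = n \<Longrightarrow> measure_pmf.prob (semo_mut n x) {s'. cnt s' = cnt x + 1} \<ge> real (n - cnt x) / real n"
proof -
  assume a: "n > 0" "length x = n"
  have "zeros x \<subseteq> {i. i < n \<and> cnt (x[i := \<not> x ! i]) = cnt x + 1}"
  proof
    fix i assume "i \<in> zeros x"
    thus "i \<in> {i. i < n \<and> cnt (x[i := \<not> x ! i]) = cnt x + 1}"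
      using a cnt_flip[of i x] by (auto simp: zeros_def)
  qed
  hence "card (zeros x) \<le> card {i. i < n \<and> cnt (x[i := \<not> x ! i]) = cnt x + 1}"
    by (intro card_mono) auto
  thus ?thesis using a by (simp add: semo_prob card_zeros divide_right_mono)
qed

lemma pmf_map_Cons: "pmf (map_pmf (Cons b) F) (b0 # bs) = (if b = b0 then pmf F bs else 0)"
proof (cases "b = b0")
  case True
  have "inj (Cons b)" by (auto simp: inj_def)
  then show ?thesis using True pmf_map_inj'[of "Cons b" F bs] by simp
next
  case False
  then show ?thesis by (auto simp: pmf_eq_0_set_pmf)
qed

lemma pmf_flip:
  assumes "n \<ge> 1"
  shows "length bs = k \<Longrightarrow> pmf (flip_pmf n k) bs = prod_list (map (\<lambda>b. if b then 1 / real n else 1 - 1 / real n) bs)"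
proof (induction k arbitrary: bs)
  case 0
  then show ?case by simp
next
  case (Suc k)
  then obtain b0 bs' where bs: "bs = b0 # bs'" "length bs' = k" by (cases bs) auto
  have p: "0 \<le> 1 / real n" "1 / real n \<le> 1" using assms by auto
  have "pmf (flip_pmf n (Suc k)) bs =
        (\<integral>b. pmf (map_pmf (Cons b) (flip_pmf n k)) (b0 # bs') \<partial>bernoulli_pmf (1 / real n))"
    by (simp add: bs pmf_bind)
  also have "\<dots> = (if b0 then pmf (flip_pmf n k) bs' * (1 / real n) else pmf (flip_pmf n k) bs' * (1 - 1 / real n))"
    by (subst integral_bernoulli_pmf[OF p]) (simp add: pmf_map_Cons)
  finally show ?case using Suc.IH[OF bs(2)] bs by (simp add: mult.commute)
qed



definition ind :: "nat \<Rightarrow> nat set \<Rightarrow> bool list" where "ind n T = map (\<lambda>i. i \<in> T) [0..<n]"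

lemma length_ind[simp]: "length (ind n T) = n" by (simp add: ind_def)

lemma nth_ind: "i < n \<Longrightarrow> ind n T ! i = (i \<in> T)" by (simp add: ind_def)

lemma prod_list_ind:
  assumes "T \<subseteq> {..<n}"
  shows "prod_list (map (\<lambda>b. if b then p else q) (ind n T)) = p ^ card T * (q::real) ^ (n - card T)"
proof -
  have "prod_list (map (\<lambda>b. if b then p else q) (ind n T)) = (\<Prod>i<n. if i \<in> T then p else q)"
    unfolding ind_def map_map
    by (subst prod.distinct_set_conv_list[symmetric]) (simp_all add: atLeast0LessThan)
  also have "\<dots> = (\<Prod>i\<in>{..<n} \<inter> {i. i \<in> T}. p) * (\<Prod>i\<in>{..<n} \<inter> - {i. i \<in> T}. q)"
    by (rule prod.If_cases) simp
  also have "{..<n} \<inter> {i. i \<in> T} = T" using assms by auto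
  also have "{..<n} \<inter> - {i. i \<in> T} = {..<n} - T" by auto
  finally show ?thesis using assms by (simp add: card_Diff_subset finite_subset)
qed

lemma ind_inj: "inj_on (ind n) (Pow {..<n})"
proof (rule inj_onI)
  fix T T' assume "T \<in> Pow {..<n}" "T' \<in> Pow {..<n}" "ind n T = ind n T'"
  hence "\<forall>i<n. (i \<in> T) = (i \<in> T')" by (metis nth_ind)
  thus "T = T'" using \<open>T \<in> Pow {..<n}\<close> \<open>T' \<in> Pow {..<n}\<close> by auto
qed
lemma pmf_flip_ind:
  assumes "n \<ge> 1" "T \<subseteq> {..<n}"
  shows "pmf (flip_pmf n n) (ind n T) = (1 / real n) ^ card T * (1 - 1 / real n) ^ (n - card T)"
  using pmf_flip[OF assms(1), of "ind n T" n] prod_list_ind[OF assms(2)] by simp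

lemma finite_ones[simp]: "finite (ones x)" by (simp add: ones_def)
lemma finite_zeros[simp]: "finite (zeros x)" by (simp add: zeros_def)

lemma cnt_map2:
  assumes "length x = n"
  shows "cnt (map2 (\<noteq>) x (ind n T)) = card {i. i < n \<and> x ! i \<noteq> (i \<in> T)}"
proof -
  have "\<And>i. i < n \<Longrightarrow> (map2 (\<noteq>) x (ind n T)) ! i = (x ! i \<noteq> (i \<in> T))"
    using assms by (simp add: nth_ind)
  hence "{i. i < length (map2 (\<noteq>) x (ind n T)) \<and> map2 (\<noteq>) x (ind n T) ! i} = {i. i < n \<and> x ! i \<noteq> (i \<in> T)}"
    using assms by (auto simp: nth_ind)
  thus ?thesis by (simp only: cnt_card)
qed

lemma cnt_map2_down:
  assumes "length x = n" "T \<subseteq> ones x"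
  shows "cnt (map2 (\<noteq>) x (ind n T)) = cnt x - card T"
proof -
  have "cnt (map2 (\<noteq>) x (ind n T)) = card {i. i < n \<and> x ! i \<noteq> (i \<in> T)}" by (rule cnt_map2[OF assms(1)])
  also have "{i. i < n \<and> x ! i \<noteq> (i \<in> T)} = ones x - T" using assms by (auto simp: ones_def)
  also have "card (ones x - T) = cnt x - card T"
    using assms by (simp add: card_Diff_subset finite_subset card_ones)
  finally show ?thesis .
qed

lemma cnt_map2_up:
  assumes "length x = n" "T \<subseteq> zeros x"
  shows "cnt (map2 (\<noteq>) x (ind n T)) = cnt x + card T"
proof -
  have "cnt (map2 (\<noteq>) x (ind n T)) = card {i. i < n \<and> x ! i \<noteq> (i \<in> T)}" by (rule cnt_map2[OF assms(1)])
  also have "{i. i < n \<and> x ! i \<noteq> (i \<in> T)} = ones x \<union> T" using assms by (auto simp: ones_def zeros_def)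
  also have "card (ones x \<union> T) = cnt x + card T"
  proof -
    have "finite T" "ones x \<inter> T = {}" using assms by (auto simp: ones_def zeros_def intro: finite_subset)
    thus ?thesis by (simp add: card_Un_disjoint card_ones)
  qed
  finally show ?thesis .
qed

lemma gsemo_set: "length x = n \<Longrightarrow> s' \<in> set_pmf (gsemo_mut n x) \<Longrightarrow> length s' = n"
proof -
  have "length bs = k" if "bs \<in> set_pmf (flip_pmf n k)" for bs k
    using that by (induction k arbitrary: bs) auto
  thus "length x = n \<Longrightarrow> s' \<in> set_pmf (gsemo_mut n x) \<Longrightarrow> length s' = n"
    unfolding gsemo_mut_def by auto
qed

lemma gsemo_prob_ge:
  assumes "n \<ge> 1" "length x = n" "U \<subseteq> Pow {..<n}"
    "\<And>T. T \<in> U \<Longrightarrow> cnt (map2 (\<noteq>) x (ind n T)) = v"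
  shows "measure_pmf.prob (gsemo_mut n x) {s'. cnt s' = v} \<ge>
          (\<Sum>T\<in>U. (1 / real n) ^ card T * (1 - 1 / real n) ^ (n - card T))"
proof -
  have fin: "finite U" using assms(3) by (rule finite_subset) simp
  have "measure_pmf.prob (gsemo_mut n x) {s'. cnt s' = v} =
        measure_pmf.prob (flip_pmf n n) {bs. cnt (map2 (\<noteq>) x bs) = v}"
    by (simp add: gsemo_mut_def vimage_def)
  also have "\<dots> \<ge> measure_pmf.prob (flip_pmf n n) (ind n ` U)"
    using assms(4) by (intro measure_pmf.finite_measure_mono) auto
  moreover have "measure_pmf.prob (flip_pmf n n) (ind n ` U) = (\<Sum>bs\<in>ind n ` U. pmf (flip_pmf n n) bs)"
    using fin by (simp add: measure_pmf.finite_measure_eq_sum_singleton measure_pmf_single)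
  moreover have "\<dots> = (\<Sum>T\<in>U. pmf (flip_pmf n n) (ind n T))"
    using inj_on_subset[OF ind_inj assms(3)] by (simp add: sum.reindex)
  moreover have "\<dots> = (\<Sum>T\<in>U. (1 / real n) ^ card T * (1 - 1 / real n) ^ (n - card T))"
    using assms(3) by (intro sum.cong refl pmf_flip_ind[OF assms(1)]) auto
  ultimately show ?thesis by simp
qed

lemma gsemo_down:
  assumes "n \<ge> 1" "length x = n"
  shows "measure_pmf.prob (gsemo_mut n x) {s'. cnt s' = cnt x - j} \<ge>
          real (cnt x choose j) * ((1 / real n) ^ j * (1 - 1 / real n) ^ (n - j))"
proof -
  let ?U = "{T. T \<subseteq> ones x \<and> card T = j}"
  have "ones x \<subseteq> {..<n}" using assms by (auto simp: ones_def)
  hence "?U \<subseteq> Pow {..<n}" by auto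
  from gsemo_prob_ge[OF assms this, of "cnt x - j"]
  have "measure_pmf.prob (gsemo_mut n x) {s'. cnt s' = cnt x - j} \<ge>
          (\<Sum>T\<in>?U. (1 / real n) ^ card T * (1 - 1 / real n) ^ (n - card T))"
    using cnt_map2_down[OF assms(2)] by auto
  also have "(\<Sum>T\<in>?U. (1 / real n) ^ card T * (1 - 1 / real n) ^ (n - card T)) =
             (\<Sum>T\<in>?U. (1 / real n) ^ j * (1 - 1 / real n) ^ (n - j))"
    by (rule sum.cong) auto
  also have "\<dots> = real (card ?U) * ((1 / real n) ^ j * (1 - 1 / real n) ^ (n - j))" by simp
  also have "card ?U = cnt x choose j"
    by (simp add: n_subsets card_ones)
  finally show ?thesis .
qed

lemma gsemo_up:
  assumes "n \<ge> 1" "length x = n"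
  shows "measure_pmf.prob (gsemo_mut n x) {s'. cnt s' = cnt x + j} \<ge>
          real ((n - cnt x) choose j) * ((1 / real n) ^ j * (1 - 1 / real n) ^ (n - j))"
proof -
  let ?U = "{T. T \<subseteq> zeros x \<and> card T = j}"
  have "zeros x \<subseteq> {..<n}" using assms by (auto simp: zeros_def)
  hence "?U \<subseteq> Pow {..<n}" by auto
  from gsemo_prob_ge[OF assms this, of "cnt x + j"]
  have "measure_pmf.prob (gsemo_mut n x) {s'. cnt s' = cnt x + j} \<ge>
          (\<Sum>T\<in>?U. (1 / real n) ^ card T * (1 - 1 / real n) ^ (n - card T))"
    using cnt_map2_up[OF assms(2)] by auto
  also have "(\<Sum>T\<in>?U. (1 / real n) ^ card T * (1 - 1 / real n) ^ (n - card T)) =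
             (\<Sum>T\<in>?U. (1 / real n) ^ j * (1 - 1 / real n) ^ (n - j))"
    by (rule sum.cong) auto
  also have "\<dots> = real (card ?U) * ((1 / real n) ^ j * (1 - 1 / real n) ^ (n - j))" by simp
  also have "card ?U = (n - cnt x) choose j"
    using assms by (simp add: n_subsets card_zeros)
  finally show ?thesis .
qed

lemma one_minus_pow_ge:
  assumes "n \<ge> 2"
  shows "(1 - 1 / real n) ^ n \<ge> 1 / 9"
proof -
  have x: "0 \<le> 1 / real n" "1 / real n \<le> 1 / 2" using assms by (auto simp: field_simps)
  have "ln (1 - 1 / real n) \<ge> - (1 / real n) - 2 * (1 / real n)\<^sup>2"
    using ln_one_minus_pos_lower_bound[OF x] .
  moreover have "2 * (1 / real n)\<^sup>2 \<le> 1 / real n" using assms by (simp add: field_simps power2_eq_square)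
  ultimately have l: "ln (1 - 1 / real n) \<ge> - 2 / real n" by simp
  have pos: "1 - 1 / real n > 0" using assms by (simp add: field_simps)
  have "real n * ln (1 - 1 / real n) \<ge> -2" using l assms by (simp add: field_simps)
  hence "exp (real n * ln (1 - 1 / real n)) \<ge> exp (-2)" by simp
  moreover have "exp (real n * ln (1 - 1 / real n)) = (1 - 1 / real n) ^ n"
    using pos by (simp add: exp_of_nat_mult)
  moreover have "exp (-2::real) \<ge> 1 / 9"
  proof -
    have "exp (2::real) = exp 1 * exp 1" by (simp add: exp_add[symmetric])
    also have "\<dots> \<le> 3 * 3" using e_less_272 by (intro mult_mono) auto
    finally have "exp (2::real) \<le> 9" by simp
    thus ?thesis by (simp add: exp_minus field_simps)
  qed
  ultimately show ?thesis by simp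
qed

lemma q_ge:
  assumes "n \<ge> 2" "j \<le> n"
  shows "(1 / real n) ^ j * (1 - 1 / real n) ^ (n - j) \<ge> 1 / (9 * real n ^ j)"
proof -
  have a: "0 \<le> 1 - 1 / real n" "1 - 1 / real n \<le> 1" using assms by auto
  have "(1 - 1 / real n) ^ (n - j) \<ge> (1 - 1 / real n) ^ n"
    by (rule power_decreasing) (use a in auto)
  hence "(1 - 1 / real n) ^ (n - j) \<ge> 1 / 9" using one_minus_pow_ge[OF assms(1)] by linarith
  hence "(1 / real n) ^ j * (1 - 1 / real n) ^ (n - j) \<ge> (1 / real n) ^ j * (1 / 9)"
    by (intro mult_left_mono) auto
  thus ?thesis by (simp add: power_one_over)
qed

lemma choose2_real: "real (k choose 2) = real k * (real k - 1) / 2"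
proof (induction k)
  case 0 then show ?case by simp
next
  case (Suc k)
  have "(Suc k) choose 2 = (k choose 1) + (k choose 2)"
    using binomial_Suc_Suc[of k 1] by (simp add: numeral_2_eq_2)
  hence "real ((Suc k) choose 2) = real k + real (k choose 2)" by simp
  then show ?case using Suc.IH by (simp add: field_simps)
qed

definition is_mut :: "(nat \<Rightarrow> bool list \<Rightarrow> bool list pmf) \<Rightarrow> bool" where
  "is_mut mut \<longleftrightarrow> mut = semo_mut \<or> mut = gsemo_mut"

lemma mut_len:
  assumes "is_mut mut" "n \<ge> 1" "length x = n" "s' \<in> set_pmf (mut n x)"
  shows "length s' = n"
proof (cases "mut = semo_mut")
  case True
  then show ?thesis using semo_set[of n x s'] assms by simp
next
  case False
  then show ?thesis using gsemo_set[of x n s'] assms by (simp add: is_mut_def)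
qed



definition w :: "nat \<Rightarrow> nat set \<Rightarrow> nat \<Rightarrow> nat" where
  "w n S c = (if c - 1 \<in> S then 0 else c) + (if c + 1 \<in> S then 0 else n - c)"

lemma prog_one:
  fixes M :: "bool list pmf"
  assumes "c \<in> S" "q \<ge> 0"
    "measure_pmf.prob M {s'. cnt s' = c - 1} \<ge> real c * q"
    "measure_pmf.prob M {s'. cnt s' = c + 1} \<ge> real (n - c) * q"
  shows "measure_pmf.prob M {s'. cnt s' \<notin> S} \<ge> real (w n S c) * q"
proof (cases "c - 1 \<in> S")
  case True
  show ?thesis
  proof (cases "c + 1 \<in> S")
    case True
    then show ?thesis using \<open>c - 1 \<in> S\<close> by (simp add: w_def)
  next
    case False
    have "measure_pmf.prob M {s'. cnt s' \<notin> S} \<ge> measure_pmf.prob M {s'. cnt s' = c + 1}"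
      using False by (intro measure_pmf.finite_measure_mono) auto
    then show ?thesis using True False assms(4) by (simp add: w_def)
  qed
next
  case False
  hence c1: "c \<ge> 1" using assms(1) by (cases c) auto
  show ?thesis
  proof (cases "c + 1 \<in> S")
    case True
    have "measure_pmf.prob M {s'. cnt s' \<notin> S} \<ge> measure_pmf.prob M {s'. cnt s' = c - 1}"
      using False by (intro measure_pmf.finite_measure_mono) auto
    then show ?thesis using True False assms(3) by (simp add: w_def)
  next
    case F2: False
    have "measure_pmf.prob M {s'. cnt s' \<notin> S} \<ge> measure_pmf.prob M ({s'. cnt s' = c - 1} \<union> {s'. cnt s' = c + 1})"
      using False F2 by (intro measure_pmf.finite_measure_mono) auto
    also have "measure_pmf.prob M ({s'. cnt s' = c - 1} \<union> {s'. cnt s' = c + 1}) =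
        measure_pmf.prob M {s'. cnt s' = c - 1} + measure_pmf.prob M {s'. cnt s' = c + 1}"
      using c1 by (intro measure_pmf.finite_measure_Union) auto
    finally show ?thesis using assms(3,4) False F2 by (simp add: w_def algebra_simps)
  qed
qed

lemma mut_w:
  assumes "is_mut mut" "n \<ge> 2" "length x = n" "cnt x \<in> S"
  shows "measure_pmf.prob (mut n x) {s'. cnt s' \<notin> S} \<ge> real (w n S (cnt x)) / (9 * real n)"
proof (cases "mut = semo_mut")
  case True
  have "measure_pmf.prob (mut n x) {s'. cnt s' \<notin> S} \<ge> real (w n S (cnt x)) * (1 / real n)"
  proof (rule prog_one)
    show "real (cnt x) * (1 / real n) \<le> measure_pmf.prob (mut n x) {s'. cnt s' = cnt x - 1}"
      using True assms semo_down[of n x] by simp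
    show "real (n - cnt x) * (1 / real n) \<le> measure_pmf.prob (mut n x) {s'. cnt s' = cnt x + 1}"
      using True assms semo_up[of n x] by simp
  qed (use assms in auto)
  moreover have "real (w n S (cnt x)) * (1 / real n) \<ge> real (w n S (cnt x)) / (9 * real n)"
    using assms(2) by (simp add: field_simps)
  ultimately show ?thesis by linarith
next
  case False
  hence g: "mut = gsemo_mut" using assms(1) by (simp add: is_mut_def)
  let ?q = "(1 / real n) ^ 1 * (1 - 1 / real n) ^ (n - 1)"
  have "measure_pmf.prob (mut n x) {s'. cnt s' \<notin> S} \<ge> real (w n S (cnt x)) * ?q"
  proof (rule prog_one)
    show "0 \<le> ?q" using assms by simp
    show "real (cnt x) * ?q \<le> measure_pmf.prob (mut n x) {s'. cnt s' = cnt x - 1}"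
      using gsemo_down[of n x 1] assms g by simp
    show "real (n - cnt x) * ?q \<le> measure_pmf.prob (mut n x) {s'. cnt s' = cnt x + 1}"
      using gsemo_up[of n x 1] assms g by simp
  qed (use assms in auto)
  moreover have "?q \<ge> 1 / (9 * real n ^ 1)" by (rule q_ge) (use assms in auto)
  hence "real (w n S (cnt x)) * ?q \<ge> real (w n S (cnt x)) * (1 / (9 * real n))"
    by (intro mult_left_mono) auto
  ultimately show ?thesis by simp
qed


lemma gsemo_caseI_up:
  assumes "n \<ge> 4" "length x = n" "2 * cnt x \<le> n" "cnt x + 1 \<notin> S \<or> cnt x + 2 \<notin> S"
  shows "measure_pmf.prob (gsemo_mut n x) {s'. cnt s' \<notin> S} \<ge> 1 / 144"
proof -
  let ?c = "cnt x"
  have k: "real (n - ?c) \<ge> real n / 2" using assms by simp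
  show ?thesis
  proof (cases "?c + 1 \<notin> S")
    case True
    have "measure_pmf.prob (gsemo_mut n x) {s'. cnt s' \<notin> S} \<ge> measure_pmf.prob (gsemo_mut n x) {s'. cnt s' = ?c + 1}"
      using True by (intro measure_pmf.finite_measure_mono) auto
    moreover have "measure_pmf.prob (gsemo_mut n x) {s'. cnt s' = ?c + 1} \<ge>
        real ((n - ?c) choose 1) * ((1 / real n) ^ 1 * (1 - 1 / real n) ^ (n - 1))"
      by (rule gsemo_up) (use assms in auto)
    moreover have "(1 / real n) ^ 1 * (1 - 1 / real n) ^ (n - 1) \<ge> 1 / (9 * real n ^ 1)"
      by (rule q_ge) (use assms in auto)
    hence "real ((n - ?c) choose 1) * ((1 / real n) ^ 1 * (1 - 1 / real n) ^ (n - 1)) \<ge>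
           (real n / 2) * (1 / (9 * real n))"
      using k by (intro mult_mono) auto
    moreover have "(real n / 2) * (1 / (9 * real n)) = 1 / 18" using assms by (simp add: field_simps)
    ultimately show ?thesis by linarith
  next
    case False
    hence F: "?c + 2 \<notin> S" using assms by auto
    have "measure_pmf.prob (gsemo_mut n x) {s'. cnt s' \<notin> S} \<ge> measure_pmf.prob (gsemo_mut n x) {s'. cnt s' = ?c + 2}"
      using F by (intro measure_pmf.finite_measure_mono) auto
    moreover have "measure_pmf.prob (gsemo_mut n x) {s'. cnt s' = ?c + 2} \<ge>
        real ((n - ?c) choose 2) * ((1 / real n) ^ 2 * (1 - 1 / real n) ^ (n - 2))"
      by (rule gsemo_up) (use assms in auto)
    moreover have "(1 / real n) ^ 2 * (1 - 1 / real n) ^ (n - 2) \<ge> 1 / (9 * real n ^ 2)"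
      by (rule q_ge) (use assms in auto)
    moreover have "real ((n - ?c) choose 2) \<ge> real n ^ 2 / 16"
    proof -
      define K where "K = real (n - ?c)"
      have K2: "K \<ge> 2" "K \<ge> real n / 2" using k assms by (auto simp: K_def)
      have "real ((n - ?c) choose 2) = K * (K - 1) / 2" unfolding K_def by (rule choose2_real)
      moreover have "K * (K - 1) / 2 - K * K / 4 = K * (K - 2) / 4" by (simp add: field_simps)
      moreover have "K * (K - 2) \<ge> 0" using K2 by simp
      moreover have "K * K \<ge> (real n / 2) * (real n / 2)" using K2 by (intro mult_mono) auto
      ultimately show ?thesis by (simp add: power2_eq_square)
    qed
    hence "real ((n - ?c) choose 2) * ((1 / real n) ^ 2 * (1 - 1 / real n) ^ (n - 2)) \<ge>
           (real n ^ 2 / 16) * (1 / (9 * real n ^ 2))"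
      using \<open>(1 / real n) ^ 2 * (1 - 1 / real n) ^ (n - 2) \<ge> 1 / (9 * real n ^ 2)\<close>
      by (intro mult_mono) auto
    moreover have "(real n ^ 2 / 16) * (1 / (9 * real n ^ 2)) = 1 / 144" using assms by (simp add: field_simps)
    ultimately show ?thesis by linarith
  qed
qed

lemma gsemo_caseI_down:
  assumes "n \<ge> 4" "length x = n" "2 * cnt x \<ge> n" "cnt x - 1 \<notin> S \<or> cnt x - 2 \<notin> S"
  shows "measure_pmf.prob (gsemo_mut n x) {s'. cnt s' \<notin> S} \<ge> 1 / 144"
proof -
  let ?c = "cnt x"
  have k: "real ?c \<ge> real n / 2" using assms by simp
  show ?thesis
  proof (cases "?c - 1 \<notin> S")
    case True
    have "measure_pmf.prob (gsemo_mut n x) {s'. cnt s' \<notin> S} \<ge> measure_pmf.prob (gsemo_mut n x) {s'. cnt s' = ?c - 1}"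
      using True by (intro measure_pmf.finite_measure_mono) auto
    moreover have "measure_pmf.prob (gsemo_mut n x) {s'. cnt s' = ?c - 1} \<ge>
        real (?c choose 1) * ((1 / real n) ^ 1 * (1 - 1 / real n) ^ (n - 1))"
      by (rule gsemo_down) (use assms in auto)
    moreover have "(1 / real n) ^ 1 * (1 - 1 / real n) ^ (n - 1) \<ge> 1 / (9 * real n ^ 1)"
      by (rule q_ge) (use assms in auto)
    hence "real (?c choose 1) * ((1 / real n) ^ 1 * (1 - 1 / real n) ^ (n - 1)) \<ge>
           (real n / 2) * (1 / (9 * real n))"
      using k by (intro mult_mono) auto
    moreover have "(real n / 2) * (1 / (9 * real n)) = 1 / 18" using assms by (simp add: field_simps)
    ultimately show ?thesis by linarith
  next
    case False
    hence F: "?c - 2 \<notin> S" using assms by auto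
    have "measure_pmf.prob (gsemo_mut n x) {s'. cnt s' \<notin> S} \<ge> measure_pmf.prob (gsemo_mut n x) {s'. cnt s' = ?c - 2}"
      using F by (intro measure_pmf.finite_measure_mono) auto
    moreover have "measure_pmf.prob (gsemo_mut n x) {s'. cnt s' = ?c - 2} \<ge>
        real (?c choose 2) * ((1 / real n) ^ 2 * (1 - 1 / real n) ^ (n - 2))"
      by (rule gsemo_down) (use assms in auto)
    moreover have "(1 / real n) ^ 2 * (1 - 1 / real n) ^ (n - 2) \<ge> 1 / (9 * real n ^ 2)"
      by (rule q_ge) (use assms in auto)
    moreover have "real (?c choose 2) \<ge> real n ^ 2 / 16"
    proof -
      define K where "K = real ?c"
      have K2: "K \<ge> 2" "K \<ge> real n / 2" using k assms by (auto simp: K_def)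
      have "real (?c choose 2) = K * (K - 1) / 2" unfolding K_def by (rule choose2_real)
      moreover have "K * (K - 1) / 2 - K * K / 4 = K * (K - 2) / 4" by (simp add: field_simps)
      moreover have "K * (K - 2) \<ge> 0" using K2 by simp
      moreover have "K * K \<ge> (real n / 2) * (real n / 2)" using K2 by (intro mult_mono) auto
      ultimately show ?thesis by (simp add: power2_eq_square)
    qed
    hence "real (?c choose 2) * ((1 / real n) ^ 2 * (1 - 1 / real n) ^ (n - 2)) \<ge>
           (real n ^ 2 / 16) * (1 / (9 * real n ^ 2))"
      using \<open>(1 / real n) ^ 2 * (1 - 1 / real n) ^ (n - 2) \<ge> 1 / (9 * real n ^ 2)\<close>
      by (intro mult_mono) auto
    moreover have "(real n ^ 2 / 16) * (1 / (9 * real n ^ 2)) = 1 / 144" using assms by (simp add: field_simps)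
    ultimately show ?thesis by linarith
  qed
qed

definition tight :: "nat set \<Rightarrow> nat \<Rightarrow> bool" where
  "tight S c \<longleftrightarrow> c \<ge> 1 \<and> c - 1 \<in> S \<and> c + 1 \<in> S"

lemma sum_image_le:
  fixes g :: "nat \<Rightarrow> nat" and h :: "nat \<Rightarrow> nat"
  assumes "finite B" "inj_on g A" "g ` A \<subseteq> B"
  shows "(\<Sum>c\<in>A. h (g c)) \<le> (\<Sum>c\<in>B. h c)"
proof -
  have "(\<Sum>c\<in>A. h (g c)) = (\<Sum>c\<in>g ` A. h c)" using assms(2) by (simp add: sum.reindex)
  also have "\<dots> \<le> (\<Sum>c\<in>B. h c)" using assms(1,3) by (intro sum_mono2) auto
  finally show ?thesis .
qed

lemma comb:
  fixes S :: "nat set"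
  assumes S: "S \<subseteq> {..n}" "S \<noteq> {}"
  defines "NT \<equiv> {c\<in>S. \<not> tight S c}"
  shows "8 * (\<Sum>c\<in>NT. w n S c) \<ge> card NT * (n + 1 - card S)"
proof -
  have finS: "finite S" using S(1) finite_subset by blast
  define a where "a = Min S"
  define b where "b = Max S"
  have aS: "a \<in> S" and bS: "b \<in> S" using finS S by (auto simp: a_def b_def)
  have amin: "\<And>s. s \<in> S \<Longrightarrow> a \<le> s" and bmax: "\<And>s. s \<in> S \<Longrightarrow> s \<le> b"
    using finS by (auto simp: a_def b_def)
  have bn: "b \<le> n" using bS S by auto
  define up where "up = {c\<in>S. c + 1 \<notin> S \<and> c < b}"
  define dn where "dn = {c\<in>S. c - 1 \<notin> S \<and> a < c}"
  have finNT: "finite NT" using finS by (simp add: NT_def)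
  have fin_up: "finite up" and fin_dn: "finite dn" using finS by (auto simp: up_def dn_def)
  have NT_sub: "NT \<subseteq> {a, b} \<union> up \<union> dn"
  proof
    fix c assume c: "c \<in> NT"
    hence cS: "c \<in> S" and nt: "\<not> tight S c" by (auto simp: NT_def)
    show "c \<in> {a, b} \<union> up \<union> dn"
    proof (cases "c = 0")
      case True
      then have "c = a" using amin[OF aS] amin[OF cS] aS by auto
      then show ?thesis by simp
    next
      case False
      then have "c - 1 \<notin> S \<or> c + 1 \<notin> S" using nt by (auto simp: tight_def)
      then show ?thesis
      proof
        assume "c - 1 \<notin> S"
        then show ?thesis using amin[OF cS] cS by (cases "c = a") (auto simp: dn_def)
      next
        assume "c + 1 \<notin> S"
        then show ?thesis using bmax[OF cS] cS by (cases "c = b") (auto simp: up_def)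
      qed
    qed
  qed
  have a_NT: "a \<in> NT"
  proof -
    have "a - 1 \<notin> S \<or> a = 0" using amin by (cases a) fastforce+
    thus ?thesis using aS by (auto simp: NT_def tight_def)
  qed
  have b_NT: "b \<in> NT"
  proof -
    have "b + 1 \<notin> S" using bmax by fastforce
    thus ?thesis using bS by (auto simp: NT_def tight_def)
  qed
  have up_NT: "up \<subseteq> NT" and dn_NT: "dn \<subseteq> NT"
    by (auto simp: up_def dn_def NT_def tight_def)
  define lo where "lo c = (if c \<in> dn \<or> c = a then c else 0) + (if c \<in> up \<or> c = b then n - c else 0)" for c
  have w_lo: "w n S c \<ge> lo c" if "c \<in> S" for c
  proof -
    have 1: "(if c - 1 \<in> S then 0 else c) \<ge> (if c \<in> dn \<or> c = a then c else 0)"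
    proof (cases "c \<in> dn \<or> c = a")
      case True
      show ?thesis
      proof (cases "c = 0")
        case False
        have "c - 1 \<notin> S"
        proof
          assume c1: "c - 1 \<in> S"
          show False
          proof (cases "c \<in> dn")
            case True then show False using c1 by (simp add: dn_def)
          next
            case F: False
            hence "c = a" using \<open>c \<in> dn \<or> c = a\<close> by simp
            then show False using amin[OF c1] \<open>c \<noteq> 0\<close> by simp
          qed
        qed
        then show ?thesis by simp
      qed simp
    qed simp
    have 2: "(if c + 1 \<in> S then 0 else n - c) \<ge> (if c \<in> up \<or> c = b then n - c else 0)"
    proof -
      have "b + 1 \<notin> S" using bmax by fastforce
      thus ?thesis by (auto simp: up_def)
    qed
    show ?thesis using 1 2 by (simp add: w_def lo_def)
  qed
  have sumw: "(\<Sum>c\<in>NT. w n S c) \<ge> (\<Sum>c\<in>NT. lo c)"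
    by (intro sum_mono w_lo) (auto simp: NT_def)
  have lo_split: "(\<Sum>c\<in>NT. lo c) = (\<Sum>c\<in>NT \<inter> (dn \<union> {a}). c) + (\<Sum>c\<in>NT \<inter> (up \<union> {b}). n - c)"
  proof -
    have "(\<Sum>c\<in>NT. lo c) = (\<Sum>c\<in>NT. (if c \<in> dn \<union> {a} then c else 0)) + (\<Sum>c\<in>NT. (if c \<in> up \<union> {b} then n - c else 0))"
      by (simp add: lo_def sum.distrib disj_commute)
    also have "\<dots> = (\<Sum>c\<in>NT \<inter> (dn \<union> {a}). c) + (\<Sum>c\<in>NT \<inter> (up \<union> {b}). n - c)"
      using finNT by (simp add: sum.inter_restrict)
    finally show ?thesis .
  qed
  have NTdn: "NT \<inter> (dn \<union> {a}) = dn \<union> {a}" and NTup: "NT \<inter> (up \<union> {b}) = up \<union> {b}"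
    using dn_NT up_NT a_NT b_NT by auto
  have cardS: "card S \<ge> 1" using finS S by (simp add: Suc_leI card_gt_0_iff)
  show ?thesis
  proof (cases "up = {}")
    case True
    have interval: "v \<in> S" if "a \<le> v" "v \<le> b" for v
      using that
    proof (induction v rule: nat_induct)
      case 0 then show ?case using aS by simp
    next
      case (Suc v)
      show ?case
      proof (cases "Suc v = a")
        case True then show ?thesis using aS by simp
      next
        case False
        hence "v \<in> S" using Suc by simp
        moreover have "v < b" using Suc by simp
        ultimately show ?thesis using True by (auto simp: up_def)
      qed
    qed
    have Seq: "S = {a..b}"
    proof
      show "S \<subseteq> {a..b}" using amin bmax by auto
      show "{a..b} \<subseteq> S" using interval by auto
    qed
    have cS: "card S = b - a + 1" using Seq amin[OF bS] by simp
    have dn_empty: "dn = {}"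
    proof -
      { fix c assume "c \<in> dn"
        hence "c \<in> S" "c - 1 \<notin> S" "a < c" by (auto simp: dn_def)
        moreover have "c \<le> b" using \<open>c \<in> S\<close> bmax by simp
        ultimately have "c - 1 \<in> S" by (intro interval) auto
        hence False using \<open>c - 1 \<notin> S\<close> by simp }
      thus ?thesis by auto
    qed
    have NT2: "card NT \<le> 2"
    proof -
      have "NT \<subseteq> {a, b}" using NT_sub True dn_empty by auto
      hence "card NT \<le> card {a, b}" by (intro card_mono) auto
      also have "\<dots> \<le> 2" by (simp add: card_insert_le_m1)
      finally show ?thesis .
    qed
    have "(\<Sum>c\<in>NT. w n S c) \<ge> a + (n - b)"
    proof -
      have "(\<Sum>c\<in>NT. lo c) = a + (n - b)"
        using lo_split NTdn NTup True dn_empty by simp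
      thus ?thesis using sumw by simp
    qed
    moreover have "n + 1 - card S = a + (n - b)" using cS bn amin[OF bS] by simp
    ultimately have "8 * (\<Sum>c\<in>NT. w n S c) \<ge> 2 * (n + 1 - card S)" by simp
    moreover have "card NT * (n + 1 - card S) \<le> 2 * (n + 1 - card S)" using NT2 by simp
    ultimately show ?thesis by linarith
  next
    case False
    define nxt where "nxt c = Min {s\<in>S. c < s}" for c
    define prv where "prv c = Max {s\<in>S. s < c}" for c
    have nxt: "nxt c \<in> S \<and> c < nxt c \<and> (\<forall>s\<in>S. c < s \<longrightarrow> nxt c \<le> s)" if "c \<in> up" for c
    proof -
      have ne: "{s\<in>S. c < s} \<noteq> {}" using that bS by (auto simp: up_def)
      have "nxt c \<in> {s\<in>S. c < s}" unfolding nxt_def using finS ne by (intro Min_in) auto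
      moreover have "\<forall>s\<in>S. c < s \<longrightarrow> nxt c \<le> s" unfolding nxt_def using finS by auto
      ultimately show ?thesis by auto
    qed
    have prv: "prv c \<in> S \<and> prv c < c \<and> (\<forall>s\<in>S. s < c \<longrightarrow> s \<le> prv c)" if "c \<in> dn" for c
    proof -
      have ne: "{s\<in>S. s < c} \<noteq> {}" using that aS by (auto simp: dn_def)
      have "prv c \<in> {s\<in>S. s < c}" unfolding prv_def using finS ne by (intro Max_in) auto
      moreover have "\<forall>s\<in>S. s < c \<longrightarrow> s \<le> prv c" unfolding prv_def using finS by auto
      ultimately show ?thesis by auto
    qed
    have nxt_dn: "nxt ` up \<subseteq> dn"
    proof
      fix z assume "z \<in> nxt ` up"
      then obtain c where c: "c \<in> up" "z = nxt c" by auto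
      have "z - 1 \<notin> S"
      proof
        assume z1: "z - 1 \<in> S"
        have "z \<noteq> c + 1" using c nxt[OF c(1)] by (auto simp: up_def)
        hence "c < z - 1" using nxt[OF c(1)] c by auto
        thus False using nxt[OF c(1)] z1 c by fastforce
      qed
      moreover have "a < z" using nxt[OF c(1)] c amin[of c] by (auto simp: up_def)
      ultimately show "z \<in> dn" using nxt[OF c(1)] c by (auto simp: dn_def)
    qed
    have prv_up: "prv ` dn \<subseteq> up"
    proof
      fix z assume "z \<in> prv ` dn"
      then obtain c where c: "c \<in> dn" "z = prv c" by auto
      have "z + 1 \<notin> S"
      proof
        assume z1: "z + 1 \<in> S"
        have "z \<noteq> c - 1" using c prv[OF c(1)] by (auto simp: dn_def)
        hence "z + 1 < c" using prv[OF c(1)] c by auto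
        thus False using prv[OF c(1)] z1 c by fastforce
      qed
      moreover have "z < b" using prv[OF c(1)] c bmax[of c] by (auto simp: dn_def)
      ultimately show "z \<in> up" using prv[OF c(1)] c by (auto simp: up_def)
    qed
    have nxt_inj: "inj_on nxt up"
    proof (rule linorder_inj_onI)
      fix c c' assume "c < c'" "c \<in> up" "c' \<in> up"
      hence "nxt c \<le> c'" using nxt by (auto simp: up_def)
      thus "nxt c \<noteq> nxt c'" using nxt[OF \<open>c' \<in> up\<close>] by auto
    qed auto
    have prv_inj: "inj_on prv dn"
    proof (rule linorder_inj_onI)
      fix c c' assume "c < c'" "c \<in> dn" "c' \<in> dn"
      hence "c \<le> prv c'" using prv by (auto simp: dn_def)
      thus "prv c \<noteq> prv c'" using prv[OF \<open>c \<in> dn\<close>] by auto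
    qed auto
    have le_n: "\<And>c. c \<in> S \<Longrightarrow> c \<le> n" using S by auto
    have s1: "(\<Sum>c\<in>NT. w n S c) \<ge> card up * n"
    proof -
      have "(\<Sum>c\<in>NT. w n S c) \<ge> (\<Sum>c\<in>dn. c) + (\<Sum>c\<in>up. n - c)"
      proof -
        have "(\<Sum>c\<in>dn. c) \<le> (\<Sum>c\<in>dn \<union> {a}. c)" using fin_dn by (intro sum_mono2) auto
        moreover have "(\<Sum>c\<in>up. n - c) \<le> (\<Sum>c\<in>up \<union> {b}. n - c)" using fin_up by (intro sum_mono2) auto
        moreover have "(\<Sum>c\<in>NT. lo c) = (\<Sum>c\<in>dn \<union> {a}. c) + (\<Sum>c\<in>up \<union> {b}. n - c)"
          using lo_split NTdn NTup by simp
        ultimately show ?thesis using sumw by linarith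
      qed
      moreover have "(\<Sum>c\<in>dn. c) \<ge> (\<Sum>c\<in>up. nxt c)" using sum_image_le[OF fin_dn nxt_inj nxt_dn, of "\<lambda>c. c"] by simp
      moreover have "(\<Sum>c\<in>up. nxt c) + (\<Sum>c\<in>up. n - c) = (\<Sum>c\<in>up. nxt c + (n - c))" by (simp add: sum.distrib)
      moreover have "(\<Sum>c\<in>up. nxt c + (n - c)) \<ge> (\<Sum>c\<in>up. n)"
      proof (rule sum_mono)
        fix c assume "c \<in> up"
        thus "n \<le> nxt c + (n - c)" using nxt[of c] le_n[of c] by (auto simp: up_def)
      qed
      ultimately show ?thesis by simp
    qed
    have s2: "(\<Sum>c\<in>NT. w n S c) \<ge> card dn * n"
    proof -
      have "(\<Sum>c\<in>NT. w n S c) \<ge> (\<Sum>c\<in>dn. c) + (\<Sum>c\<in>up. n - c)"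
      proof -
        have "(\<Sum>c\<in>dn. c) \<le> (\<Sum>c\<in>dn \<union> {a}. c)" using fin_dn by (intro sum_mono2) auto
        moreover have "(\<Sum>c\<in>up. n - c) \<le> (\<Sum>c\<in>up \<union> {b}. n - c)" using fin_up by (intro sum_mono2) auto
        moreover have "(\<Sum>c\<in>NT. lo c) = (\<Sum>c\<in>dn \<union> {a}. c) + (\<Sum>c\<in>up \<union> {b}. n - c)"
          using lo_split NTdn NTup by simp
        ultimately show ?thesis using sumw by linarith
      qed
      moreover have "(\<Sum>c\<in>up. n - c) \<ge> (\<Sum>c\<in>dn. n - prv c)"
        using sum_image_le[OF fin_up prv_inj prv_up, of "\<lambda>c. n - c"] by simp
      moreover have "(\<Sum>c\<in>dn. c) + (\<Sum>c\<in>dn. n - prv c) = (\<Sum>c\<in>dn. c + (n - prv c))" by (simp add: sum.distrib)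
      moreover have "(\<Sum>c\<in>dn. c + (n - prv c)) \<ge> (\<Sum>c\<in>dn. n)"
      proof (rule sum_mono)
        fix c assume "c \<in> dn"
        thus "n \<le> c + (n - prv c)" using prv[of c] by auto
      qed
      ultimately show ?thesis by simp
    qed
    have upne: "card up \<ge> 1" using False fin_up by (simp add: Suc_leI card_gt_0_iff)
    have "card NT \<le> card ({a, b} \<union> up \<union> dn)" using NT_sub fin_up fin_dn by (intro card_mono) auto
    also have "\<dots> \<le> card ({a, b} \<union> up) + card dn" by (rule card_Un_le)
    also have "\<dots> \<le> card {a, b} + card up + card dn" using card_Un_le[of "{a,b}" up] by simp
    also have "card {a, b} \<le> 2" by (simp add: card_insert_le_m1)
    hence "card {a, b} + card up + card dn \<le> 2 + card up + card dn" by simp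
    finally have "card NT \<le> 2 + card up + card dn" .
    hence "card NT * n \<le> (2 + card up + card dn) * n" by (rule mult_le_mono1)
    also have "\<dots> \<le> 8 * (\<Sum>c\<in>NT. w n S c)"
    proof -
      have "1 * n \<le> card up * n" using upne by (rule mult_le_mono1)
      hence "2 * n \<le> 2 * (card up * n)" by linarith
      moreover have "(2 + card up + card dn) * n = 2 * n + card up * n + card dn * n" by (simp add: algebra_simps)
      ultimately show ?thesis using s1 s2 by linarith
    qed
    finally have "card NT * n \<le> 8 * (\<Sum>c\<in>NT. w n S c)" .
    moreover have "n + 1 - card S \<le> n" using cardS by simp
    ultimately show ?thesis by (meson le_trans mult_le_mono2)
  qed
qed

lemma pos_in_nth: "x \<in> set xs \<Longrightarrow> pos_in xs x < length xs \<and> xs ! pos_in xs x = x"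
  by (induction xs) auto

lemma sortk:
  fixes k :: "'a::linorder \<Rightarrow> real"
  assumes "finite P" "inj_on k P"
  defines "xs \<equiv> sort_key k (sorted_list_of_set P)"
  shows "distinct xs \<and> set xs = P \<and> sorted_wrt (\<lambda>u v. k u < k v) xs"
proof -
  have d: "distinct xs" and s: "set xs = P" using assms by (auto simp: xs_def)
  have "sorted (map k xs)" by (simp add: xs_def sorted_sort_key)
  moreover have "distinct (map k xs)" using d s assms(2) by (simp add: distinct_map)
  ultimately have "sorted_wrt (<) (map k xs)" by (simp add: strict_sorted_iff)
  thus ?thesis using d s by (simp add: sorted_wrt_map)
qed

locale sorted_ctx =
  fixes k :: "'a \<Rightarrow> real" and xs :: "'a list" and P :: "'a set"
  assumes sw: "sorted_wrt (\<lambda>u v. k u < k v) xs" and setxs: "set xs = P"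
begin

lemma lt_iff: "i < length xs \<Longrightarrow> j < length xs \<Longrightarrow> k (xs ! i) < k (xs ! j) \<longleftrightarrow> i < j"
proof -
  assume a: "i < length xs" "j < length xs"
  have "i < j \<Longrightarrow> k (xs ! i) < k (xs ! j)" using sw a by (simp add: sorted_wrt_iff_nth_less)
  moreover have "j < i \<Longrightarrow> k (xs ! j) < k (xs ! i)" using sw a by (simp add: sorted_wrt_iff_nth_less)
  ultimately show ?thesis by (metis less_asym linorder_neqE_nat less_irrefl)
qed

lemma nbr:
  assumes x: "x \<in> P"
  defines "i \<equiv> pos_in xs x"
  shows "i < length xs" "xs ! i = x"
    "(i = 0) \<longleftrightarrow> (\<forall>y\<in>P. k x \<le> k y)"
    "(i + 1 = length xs) \<longleftrightarrow> (\<forall>y\<in>P. k y \<le> k x)"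
    "i \<noteq> 0 \<Longrightarrow> xs ! (i - 1) \<in> P \<and> k (xs ! (i - 1)) < k x \<and> (\<forall>y\<in>P. k y < k x \<longrightarrow> k y \<le> k (xs ! (i - 1)))"
    "i + 1 \<noteq> length xs \<Longrightarrow> xs ! (i + 1) \<in> P \<and> k x < k (xs ! (i + 1)) \<and> (\<forall>y\<in>P. k x < k y \<longrightarrow> k (xs ! (i + 1)) \<le> k y)"
proof -
  have xi: "i < length xs" "xs ! i = x" using pos_in_nth[of x xs] x setxs by (auto simp: i_def)
  show "i < length xs" "xs ! i = x" by (fact xi)+
  have yP: "\<And>y. y \<in> P \<Longrightarrow> \<exists>j<length xs. xs ! j = y" using setxs by (auto simp: in_set_conv_nth)
  show "(i = 0) \<longleftrightarrow> (\<forall>y\<in>P. k x \<le> k y)"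
  proof
    assume "i = 0"
    show "\<forall>y\<in>P. k x \<le> k y"
    proof
      fix y assume "y \<in> P"
      then obtain j where j: "j < length xs" "xs ! j = y" using yP by blast
      show "k x \<le> k y"
      proof (cases "j = 0")
        case True then show ?thesis using j xi \<open>i = 0\<close> by simp
      next
        case False then show ?thesis using lt_iff[of i j] j xi \<open>i = 0\<close> by simp
      qed
    qed
  next
    assume h: "\<forall>y\<in>P. k x \<le> k y"
    show "i = 0"
    proof (rule ccontr)
      assume "i \<noteq> 0"
      moreover have "0 < length xs" using xi(1) by linarith
      ultimately have "k (xs ! 0) < k x" using lt_iff[of 0 i] xi by simp
      moreover have "xs ! 0 \<in> P" using xi setxs by (metis nth_mem gr_zeroI less_trans \<open>i \<noteq> 0\<close>)
      ultimately show False using h by fastforce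
    qed
  qed
  show "(i + 1 = length xs) \<longleftrightarrow> (\<forall>y\<in>P. k y \<le> k x)"
  proof
    assume a: "i + 1 = length xs"
    show "\<forall>y\<in>P. k y \<le> k x"
    proof
      fix y assume "y \<in> P"
      then obtain j where j: "j < length xs" "xs ! j = y" using yP by blast
      show "k y \<le> k x"
      proof (cases "j = i")
        case True then show ?thesis using j xi by simp
      next
        case False then have "j < i" using j a by simp
        then show ?thesis using lt_iff[of j i] j xi by simp
      qed
    qed
  next
    assume h: "\<forall>y\<in>P. k y \<le> k x"
    show "i + 1 = length xs"
    proof (rule ccontr)
      assume "i + 1 \<noteq> length xs"
      hence l: "i + 1 < length xs" using xi by simp
      hence "k x < k (xs ! (i + 1))" using lt_iff[of i "i+1"] xi by simp
      moreover have "xs ! (i + 1) \<in> P" using l setxs by (metis nth_mem)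
      ultimately show False using h by fastforce
    qed
  qed
  show "i \<noteq> 0 \<Longrightarrow> xs ! (i - 1) \<in> P \<and> k (xs ! (i - 1)) < k x \<and> (\<forall>y\<in>P. k y < k x \<longrightarrow> k y \<le> k (xs ! (i - 1)))"
  proof -
    assume i0: "i \<noteq> 0"
    have l: "i - 1 < length xs" using xi by simp
    have 1: "xs ! (i - 1) \<in> P" using l setxs by (metis nth_mem)
    have 2: "k (xs ! (i - 1)) < k x" using lt_iff[of "i - 1" i] xi l i0 by simp
    have 3: "\<forall>y\<in>P. k y < k x \<longrightarrow> k y \<le> k (xs ! (i - 1))"
    proof (intro ballI impI)
      fix y assume "y \<in> P" "k y < k x"
      then obtain j where j: "j < length xs" "xs ! j = y" using yP by blast
      have "j < i" using lt_iff[of j i] j xi \<open>k y < k x\<close> by simp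
      hence "j \<le> i - 1" by simp
      show "k y \<le> k (xs ! (i - 1))"
      proof (cases "j = i - 1")
        case True then show ?thesis using j by simp
      next
        case False then show ?thesis using lt_iff[of j "i - 1"] j l \<open>j \<le> i - 1\<close> by simp
      qed
    qed
    show ?thesis using 1 2 3 by blast
  qed
  show "i + 1 \<noteq> length xs \<Longrightarrow> xs ! (i + 1) \<in> P \<and> k x < k (xs ! (i + 1)) \<and> (\<forall>y\<in>P. k x < k y \<longrightarrow> k (xs ! (i + 1)) \<le> k y)"
  proof -
    assume i0: "i + 1 \<noteq> length xs"
    have l: "i + 1 < length xs" using xi i0 by simp
    have 1: "xs ! (i + 1) \<in> P" using l setxs by (metis nth_mem)
    have 2: "k x < k (xs ! (i + 1))" using lt_iff[of i "i + 1"] xi l by simp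
    have 3: "\<forall>y\<in>P. k x < k y \<longrightarrow> k (xs ! (i + 1)) \<le> k y"
    proof (intro ballI impI)
      fix y assume "y \<in> P" "k x < k y"
      then obtain j where j: "j < length xs" "xs ! j = y" using yP by blast
      have "i < j" using lt_iff[of i j] j xi \<open>k x < k y\<close> by simp
      hence "i + 1 \<le> j" by simp
      show "k (xs ! (i + 1)) \<le> k y"
      proof (cases "j = i + 1")
        case True then show ?thesis using j by simp
      next
        case False then show ?thesis using lt_iff[of "i + 1" j] j l \<open>i + 1 \<le> j\<close> by simp
      qed
    qed
    show ?thesis using 1 2 3 by blast
  qed
qed

end

definition pred :: "nat set \<Rightarrow> nat \<Rightarrow> nat" where "pred S c = Max {s\<in>S. s < c}"
definition succ :: "nat set \<Rightarrow> nat \<Rightarrow> nat" where "succ S c = Min {s\<in>S. c < s}"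

lemma pred_eq: "finite S \<Longrightarrow> s \<in> S \<Longrightarrow> s < c \<Longrightarrow> (\<forall>t\<in>S. t < c \<longrightarrow> t \<le> s) \<Longrightarrow> pred S c = s"
  unfolding pred_def by (intro Max_eqI) auto

lemma succ_eq: "finite S \<Longrightarrow> s \<in> S \<Longrightarrow> c < s \<Longrightarrow> (\<forall>t\<in>S. c < t \<longrightarrow> s \<le> t) \<Longrightarrow> succ S c = s"
  unfolding succ_def by (intro Min_eqI) auto

lemma inj_key: "inj_on cnt P \<Longrightarrow> inj_on (\<lambda>y. fst (OneMinMax n y)) P"
  by (auto simp: OneMinMax_def inj_on_def)

lemma inj_key2: "inj_on cnt P \<Longrightarrow> inj_on (\<lambda>y. snd (OneMinMax n y)) P"
  by (auto simp: OneMinMax_def inj_on_def)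

lemma HVC_cnt:
  assumes finP: "finite P" and inj: "inj_on cnt P" and x: "x \<in> P"
  shows "HVC (-r, -r) (OneMinMax n) P x =
    ereal ((if \<exists>s\<in>cnt ` P. s < cnt x then real (cnt x) - real (pred (cnt ` P) (cnt x)) else real (cnt x) + r) *
           (if \<exists>s\<in>cnt ` P. cnt x < s then real (succ (cnt ` P) (cnt x)) - real (cnt x) else real n - real (cnt x) + r))"
proof -
  let ?k = "\<lambda>y. fst (OneMinMax n y)"
  define xs where "xs = sort_key ?k (sorted_list_of_set P)"
  have props: "distinct xs \<and> set xs = P \<and> sorted_wrt (\<lambda>u v. ?k u < ?k v) xs"
    unfolding xs_def by (rule sortk[OF finP inj_key[OF inj]])
  interpret sorted_ctx ?k xs P using props by unfold_locales auto
  define i where "i = pos_in xs x"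
  let ?S = "cnt ` P" and ?c = "cnt x"
  have finS: "finite ?S" using finP by simp
  have k: "\<And>y. ?k y = real (cnt y)" by (simp add: OneMinMax_def)
  have N: "i < length xs" "xs ! i = x"
    "(i = 0) \<longleftrightarrow> (\<forall>y\<in>P. ?k x \<le> ?k y)"
    "(i + 1 = length xs) \<longleftrightarrow> (\<forall>y\<in>P. ?k y \<le> ?k x)"
    "i \<noteq> 0 \<Longrightarrow> xs ! (i - 1) \<in> P \<and> ?k (xs ! (i - 1)) < ?k x \<and> (\<forall>y\<in>P. ?k y < ?k x \<longrightarrow> ?k y \<le> ?k (xs ! (i - 1)))"
    "i + 1 \<noteq> length xs \<Longrightarrow> xs ! (i + 1) \<in> P \<and> ?k x < ?k (xs ! (i + 1)) \<and> (\<forall>y\<in>P. ?k x < ?k y \<longrightarrow> ?k (xs ! (i + 1)) \<le> ?k y)"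
    using nbr[OF x] by (simp_all add: i_def)
  have L0: "(i = 0) \<longleftrightarrow> \<not> (\<exists>s\<in>?S. s < ?c)" using N(3) by (auto simp: k not_less)
  have R0: "(i + 1 = length xs) \<longleftrightarrow> \<not> (\<exists>s\<in>?S. ?c < s)" using N(4) by (auto simp: k not_less)
  have Lp: "cnt (xs ! (i - 1)) = pred ?S ?c" if "i \<noteq> 0"
    using N(5)[OF that] by (intro pred_eq[symmetric] finS) (auto simp: k)
  have Rs: "cnt (xs ! (i + 1)) = succ ?S ?c" if "i + 1 \<noteq> length xs"
    using N(6)[OF that] by (intro succ_eq[symmetric] finS) (auto simp: k)
  have "HVC (-r, -r) (OneMinMax n) P x =
     ereal ((fst (OneMinMax n x) - (if i = 0 then - r else fst (OneMinMax n (xs ! (i - 1))))) *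
            (snd (OneMinMax n x) - (if i + 1 = length xs then - r else snd (OneMinMax n (xs ! (i + 1))))))"
    by (simp add: HVC_def sorted_pop_def Let_def xs_def i_def)
  also have "\<dots> = ereal ((if \<exists>s\<in>?S. s < ?c then real ?c - real (pred ?S ?c) else real ?c + r) *
           (if \<exists>s\<in>?S. ?c < s then real (succ ?S ?c) - real ?c else real n - real ?c + r))"
  proof -
    have "(fst (OneMinMax n x) - (if i = 0 then - r else fst (OneMinMax n (xs ! (i - 1))))) =
          (if \<exists>s\<in>?S. s < ?c then real ?c - real (pred ?S ?c) else real ?c + r)"
      using L0 Lp by (auto simp: OneMinMax_def)
    moreover have "(snd (OneMinMax n x) - (if i + 1 = length xs then - r else snd (OneMinMax n (xs ! (i + 1))))) =
          (if \<exists>s\<in>?S. ?c < s then real (succ ?S ?c) - real ?c else real n - real ?c + r)"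
      using R0 Rs by (auto simp: OneMinMax_def)
    ultimately show ?thesis by simp
  qed
  finally show ?thesis .
qed

lemma exMax: assumes "finite P" "P \<noteq> {}" shows "\<exists>y\<in>P. cnt y = Max (cnt ` P)"
proof -
  have "Max (cnt ` P) \<in> cnt ` P" using assms by (intro Max_in) auto
  thus ?thesis by auto
qed
lemma exMin: assumes "finite P" "P \<noteq> {}" shows "\<exists>y\<in>P. cnt y = Min (cnt ` P)"
proof -
  have "Min (cnt ` P) \<in> cnt ` P" using assms by (intro Min_in) auto
  thus ?thesis by auto
qed

lemma Max_key1: assumes "finite P" "P \<noteq> {}" shows "Max ((\<lambda>y. real (cnt y)) ` P) = real (Max (cnt ` P))"
proof -
  obtain y where y: "y \<in> P" "cnt y = Max (cnt ` P)" using exMax[OF assms] by blast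
  have "\<And>z. z \<in> P \<Longrightarrow> cnt z \<le> Max (cnt ` P)" using assms by simp
  thus ?thesis using assms y by (intro Max_eqI) (auto simp: image_iff intro: bexI[of _ y])
qed
lemma Min_key1: assumes "finite P" "P \<noteq> {}" shows "Min ((\<lambda>y. real (cnt y)) ` P) = real (Min (cnt ` P))"
proof -
  obtain y where y: "y \<in> P" "cnt y = Min (cnt ` P)" using exMin[OF assms] by blast
  have "\<And>z. z \<in> P \<Longrightarrow> Min (cnt ` P) \<le> cnt z" using assms by simp
  thus ?thesis using assms y by (intro Min_eqI) (auto simp: image_iff intro: bexI[of _ y])
qed
lemma Max_key2: assumes "finite P" "P \<noteq> {}" shows "Max ((\<lambda>y. real n - real (cnt y)) ` P) = real n - real (Min (cnt ` P))"
proof -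
  obtain y where y: "y \<in> P" "cnt y = Min (cnt ` P)" using exMin[OF assms] by blast
  have "\<And>z. z \<in> P \<Longrightarrow> Min (cnt ` P) \<le> cnt z" using assms by simp
  thus ?thesis using assms y by (intro Max_eqI) (auto simp: image_iff intro: bexI[of _ y])
qed
lemma Min_key2: assumes "finite P" "P \<noteq> {}" shows "Min ((\<lambda>y. real n - real (cnt y)) ` P) = real n - real (Max (cnt ` P))"
proof -
  obtain y where y: "y \<in> P" "cnt y = Max (cnt ` P)" using exMax[OF assms] by blast
  have "\<And>z. z \<in> P \<Longrightarrow> cnt z \<le> Max (cnt ` P)" using assms by simp
  thus ?thesis using assms y by (intro Min_eqI) (auto simp: image_iff intro: bexI[of _ y])
qed

lemma CDC1_cnt:
  assumes finP: "finite P" and inj: "inj_on cnt P" and x: "x \<in> P"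
  shows "CDC_obj fst (OneMinMax n) P x =
    (if (\<exists>s\<in>cnt ` P. s < cnt x) \<and> (\<exists>s\<in>cnt ` P. cnt x < s)
     then ereal ((real (succ (cnt ` P) (cnt x)) - real (pred (cnt ` P) (cnt x))) / (real (Max (cnt ` P)) - real (Min (cnt ` P))))
     else \<infinity>)"
proof -
  let ?k = "\<lambda>y. fst (OneMinMax n y)"
  define xs where "xs = sort_key ?k (sorted_list_of_set P)"
  have props: "distinct xs \<and> set xs = P \<and> sorted_wrt (\<lambda>u v. ?k u < ?k v) xs"
    unfolding xs_def by (rule sortk[OF finP inj_key[OF inj]])
  interpret sorted_ctx ?k xs P using props by unfold_locales auto
  define i where "i = pos_in xs x"
  let ?S = "cnt ` P" and ?c = "cnt x"
  have finS: "finite ?S" using finP by simp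
  have Pne: "P \<noteq> {}" using x by auto
  have k: "\<And>y. ?k y = real (cnt y)" by (simp add: OneMinMax_def)
  have N: "i < length xs" "xs ! i = x"
    "(i = 0) \<longleftrightarrow> (\<forall>y\<in>P. ?k x \<le> ?k y)"
    "(i + 1 = length xs) \<longleftrightarrow> (\<forall>y\<in>P. ?k y \<le> ?k x)"
    "i \<noteq> 0 \<Longrightarrow> xs ! (i - 1) \<in> P \<and> ?k (xs ! (i - 1)) < ?k x \<and> (\<forall>y\<in>P. ?k y < ?k x \<longrightarrow> ?k y \<le> ?k (xs ! (i - 1)))"
    "i + 1 \<noteq> length xs \<Longrightarrow> xs ! (i + 1) \<in> P \<and> ?k x < ?k (xs ! (i + 1)) \<and> (\<forall>y\<in>P. ?k x < ?k y \<longrightarrow> ?k (xs ! (i + 1)) \<le> ?k y)"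
    using nbr[OF x] by (simp_all add: i_def)
  have L0: "(i = 0) \<longleftrightarrow> \<not> (\<exists>s\<in>?S. s < ?c)" using N(3) by (auto simp: k not_less)
  have R0: "(i + 1 = length xs) \<longleftrightarrow> \<not> (\<exists>s\<in>?S. ?c < s)" using N(4) by (auto simp: k not_less)
  have Lp: "cnt (xs ! (i - 1)) = pred ?S ?c" if "i \<noteq> 0"
    using N(5)[OF that] by (intro pred_eq[symmetric] finS) (auto simp: k)
  have Rs: "cnt (xs ! (i + 1)) = succ ?S ?c" if "i + 1 \<noteq> length xs"
    using N(6)[OF that] by (intro succ_eq[symmetric] finS) (auto simp: k)
  have "CDC_obj fst (OneMinMax n) P x =
     (if i = 0 \<or> i + 1 = length xs then \<infinity>
      else ereal ((?k (xs ! (i + 1)) - ?k (xs ! (i - 1))) / (Max (?k ` P) - Min (?k ` P))))"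
    by (simp add: CDC_obj_def sorted_pop_def Let_def xs_def i_def)
  also have "\<dots> = (if (\<exists>s\<in>?S. s < ?c) \<and> (\<exists>s\<in>?S. ?c < s)
     then ereal ((real (succ ?S ?c) - real (pred ?S ?c)) / (real (Max ?S) - real (Min ?S)))
     else \<infinity>)"
    using L0 R0 Lp Rs by (auto simp: k Max_key1[OF finP Pne] Min_key1[OF finP Pne])
  finally show ?thesis .
qed

lemma CDC2_cnt:
  assumes finP: "finite P" and inj: "inj_on cnt P" and x: "x \<in> P"
  shows "CDC_obj snd (OneMinMax n) P x =
    (if (\<exists>s\<in>cnt ` P. s < cnt x) \<and> (\<exists>s\<in>cnt ` P. cnt x < s)
     then ereal ((real (succ (cnt ` P) (cnt x)) - real (pred (cnt ` P) (cnt x))) / (real (Max (cnt ` P)) - real (Min (cnt ` P))))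
     else \<infinity>)"
proof -
  let ?k = "\<lambda>y. snd (OneMinMax n y)"
  define xs where "xs = sort_key ?k (sorted_list_of_set P)"
  have props: "distinct xs \<and> set xs = P \<and> sorted_wrt (\<lambda>u v. ?k u < ?k v) xs"
    unfolding xs_def by (rule sortk[OF finP inj_key2[OF inj]])
  interpret sorted_ctx ?k xs P using props by unfold_locales auto
  define i where "i = pos_in xs x"
  let ?S = "cnt ` P" and ?c = "cnt x"
  have finS: "finite ?S" using finP by simp
  have Pne: "P \<noteq> {}" using x by auto
  have k: "\<And>y. ?k y = real n - real (cnt y)" by (simp add: OneMinMax_def)
  have N: "i < length xs" "xs ! i = x"
    "(i = 0) \<longleftrightarrow> (\<forall>y\<in>P. ?k x \<le> ?k y)"
    "(i + 1 = length xs) \<longleftrightarrow> (\<forall>y\<in>P. ?k y \<le> ?k x)"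
    "i \<noteq> 0 \<Longrightarrow> xs ! (i - 1) \<in> P \<and> ?k (xs ! (i - 1)) < ?k x \<and> (\<forall>y\<in>P. ?k y < ?k x \<longrightarrow> ?k y \<le> ?k (xs ! (i - 1)))"
    "i + 1 \<noteq> length xs \<Longrightarrow> xs ! (i + 1) \<in> P \<and> ?k x < ?k (xs ! (i + 1)) \<and> (\<forall>y\<in>P. ?k x < ?k y \<longrightarrow> ?k (xs ! (i + 1)) \<le> ?k y)"
    using nbr[OF x] by (simp_all add: i_def)
  have L0: "(i = 0) \<longleftrightarrow> \<not> (\<exists>s\<in>?S. ?c < s)" using N(3) by (auto simp: k not_less)
  have R0: "(i + 1 = length xs) \<longleftrightarrow> \<not> (\<exists>s\<in>?S. s < ?c)" using N(4) by (auto simp: k not_less)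
  have Lp: "cnt (xs ! (i - 1)) = succ ?S ?c" if "i \<noteq> 0"
    using N(5)[OF that] by (intro succ_eq[symmetric] finS) (auto simp: k)
  have Rs: "cnt (xs ! (i + 1)) = pred ?S ?c" if "i + 1 \<noteq> length xs"
    using N(6)[OF that] by (intro pred_eq[symmetric] finS) (auto simp: k)
  have "CDC_obj snd (OneMinMax n) P x =
     (if i = 0 \<or> i + 1 = length xs then \<infinity>
      else ereal ((?k (xs ! (i + 1)) - ?k (xs ! (i - 1))) / (Max (?k ` P) - Min (?k ` P))))"
    by (simp add: CDC_obj_def sorted_pop_def Let_def xs_def i_def)
  also have "\<dots> = (if (\<exists>s\<in>?S. s < ?c) \<and> (\<exists>s\<in>?S. ?c < s)
     then ereal ((real (succ ?S ?c) - real (pred ?S ?c)) / (real (Max ?S) - real (Min ?S)))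
     else \<infinity>)"
    using L0 R0 Lp Rs by (auto simp: k Max_key2[OF finP Pne] Min_key2[OF finP Pne])
  finally show ?thesis .
qed

lemma CDC_cnt:
  assumes finP: "finite P" and inj: "inj_on cnt P" and x: "x \<in> P"
  shows "CDC (OneMinMax n) P x =
    (if (\<exists>s\<in>cnt ` P. s < cnt x) \<and> (\<exists>s\<in>cnt ` P. cnt x < s)
     then ereal (2 * ((real (succ (cnt ` P) (cnt x)) - real (pred (cnt ` P) (cnt x))) / (real (Max (cnt ` P)) - real (Min (cnt ` P)))))
     else \<infinity>)"
  unfolding CDC_def CDC1_cnt[OF assms] CDC2_cnt[OF assms] by simp

definition differ :: "(bool list \<Rightarrow> ereal) \<Rightarrow> bool list set \<Rightarrow> bool" where
  "differ Dv P \<longleftrightarrow> (\<exists>x\<in>P. \<exists>y\<in>P. Dv x \<noteq> Dv y)"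

definition selset :: "(bool list \<Rightarrow> ereal) \<Rightarrow> bool list set \<Rightarrow> bool list set" where
  "selset Dv P = (if differ Dv P then {x\<in>P. Dv x \<noteq> Min (Dv ` P)} else P)"

lemma NMUAR_selset: "NMUAR D P = pmf_of_set (selset (D P) P)"
  unfolding NMUAR_def selset_def differ_def by (subst if_distrib[of pmf_of_set]) (rule refl)

lemma selset_eq1: "differ Dv P \<Longrightarrow> selset Dv P = {x\<in>P. Dv x \<noteq> Min (Dv ` P)}"
  by (simp add: selset_def)
lemma selset_eq2: "\<not> differ Dv P \<Longrightarrow> selset Dv P = P"
  by (simp add: selset_def)

lemma selset_props:
  assumes "finite P" "P \<noteq> {}"
  shows "selset Dv P \<noteq> {}" "selset Dv P \<subseteq> P" "finite (selset Dv P)"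
proof -
  show sub: "selset Dv P \<subseteq> P"
    by (cases "differ Dv P") (auto dest: selset_eq1 selset_eq2)
  show "finite (selset Dv P)" using assms(1) sub by (rule finite_subset[rotated])
  show "selset Dv P \<noteq> {}"
  proof (cases "differ Dv P")
    case True
    then obtain x y where xy: "x \<in> P" "y \<in> P" "Dv x \<noteq> Dv y" unfolding differ_def by blast
    have "Dv x \<noteq> Min (Dv ` P) \<or> Dv y \<noteq> Min (Dv ` P)" using xy(3) by auto
    hence "x \<in> {x\<in>P. Dv x \<noteq> Min (Dv ` P)} \<or> y \<in> {x\<in>P. Dv x \<noteq> Min (Dv ` P)}" using xy by blast
    thus ?thesis using selset_eq1[OF True] by blast
  next
    case False then show ?thesis using assms selset_eq2[OF False] by simp
  qed
qed

lemma selset_min: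
  assumes "finite P" "y \<in> P" "\<forall>x\<in>P. Dv y \<le> Dv x" "\<exists>x\<in>P. Dv x \<noteq> Dv y"
  shows "selset Dv P = {x\<in>P. Dv x \<noteq> Dv y}"
proof -
  have m: "Min (Dv ` P) = Dv y" using assms by (intro Min_eqI) auto
  have "differ Dv P" using assms unfolding differ_def by blast
  thus ?thesis using selset_eq1 m by simp
qed

lemma nn_avg:
  assumes "finite A" "A \<noteq> {}" "\<And>x. x \<in> A \<Longrightarrow> g x \<ge> 0"
  shows "(\<integral>\<^sup>+x. ennreal (g x) \<partial>measure_pmf (pmf_of_set A)) = ennreal ((\<Sum>x\<in>A. g x) / real (card A))"
proof -
  have c: "card A > 0" using assms by (simp add: card_gt_0_iff)
  have "(\<integral>\<^sup>+x. ennreal (g x) \<partial>measure_pmf (pmf_of_set A)) = (\<Sum>x\<in>A. ennreal (g x)) / of_nat (card A)"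
    using assms by (simp add: nn_integral_pmf_of_set)
  also have "(\<Sum>x\<in>A. ennreal (g x)) = ennreal (\<Sum>x\<in>A. g x)" using assms by (simp add: sum_ennreal)
  also have "(of_nat (card A) :: ennreal) = ennreal (real (card A))" by (simp add: ennreal_of_nat_eq_real_of_nat)
  also have "ennreal (\<Sum>x\<in>A. g x) / ennreal (real (card A)) = ennreal ((\<Sum>x\<in>A. g x) / real (card A))"
    using c assms by (intro divide_ennreal) (auto intro: sum_nonneg)
  finally show ?thesis .
qed

lemma nn_lower:
  assumes "finite A" "A \<noteq> {}" "\<And>x. x \<in> A \<Longrightarrow> g x \<ge> \<beta>"
  shows "(\<integral>\<^sup>+x. ennreal (g x) \<partial>measure_pmf (pmf_of_set A)) \<ge> ennreal \<beta>"
proof -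
  have "(\<integral>\<^sup>+x. ennreal \<beta> \<partial>measure_pmf (pmf_of_set A)) \<le> (\<integral>\<^sup>+x. ennreal (g x) \<partial>measure_pmf (pmf_of_set A))"
    using assms by (intro nn_integral_mono_AE AE_pmfI) (auto intro: ennreal_leI)
  thus ?thesis by simp
qed

lemma HVC_facts:
  assumes finP: "finite P" and inj: "inj_on cnt P" and x: "x \<in> P" and r: "r \<ge> 1" and cn: "cnt x \<le> n"
  defines "S \<equiv> cnt ` P"
  shows "tight S (cnt x) \<Longrightarrow> HVC (-r, -r) (OneMinMax n) P x = ereal 1"
    "HVC (-r, -r) (OneMinMax n) P x \<ge> ereal 1"
    "HVC (-r, -r) (OneMinMax n) P x = ereal 1 \<Longrightarrow> w n S (cnt x) = 0"
proof -
  let ?c = "cnt x"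
  have finS: "finite S" using finP by (simp add: S_def)
  define A where "A = (if \<exists>s\<in>S. s < ?c then real ?c - real (pred S ?c) else real ?c + r)"
  define B where "B = (if \<exists>s\<in>S. ?c < s then real (succ S ?c) - real ?c else real n - real ?c + r)"
  have H: "HVC (-r, -r) (OneMinMax n) P x = ereal (A * B)"
    unfolding A_def B_def S_def by (rule HVC_cnt[OF finP inj x])
  have predP: "pred S ?c \<in> S \<and> pred S ?c < ?c" if "\<exists>s\<in>S. s < ?c"
  proof -
    have "pred S ?c \<in> {s\<in>S. s < ?c}" unfolding pred_def using that finS by (intro Max_in) auto
    thus ?thesis by simp
  qed
  have succP: "succ S ?c \<in> S \<and> ?c < succ S ?c" if "\<exists>s\<in>S. ?c < s"
  proof -
    have "succ S ?c \<in> {s\<in>S. ?c < s}" unfolding succ_def using that finS by (intro Min_in) auto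
    thus ?thesis by simp
  qed
  have A1: "A \<ge> 1"
  proof (cases "\<exists>s\<in>S. s < ?c")
    case True
    hence "pred S ?c + 1 \<le> ?c" using predP by auto
    hence "real (pred S ?c) + 1 \<le> real ?c" by linarith
    then show ?thesis using True by (simp add: A_def)
  qed (use r in \<open>auto simp: A_def\<close>)
  have B1: "B \<ge> 1"
  proof (cases "\<exists>s\<in>S. ?c < s")
    case True
    hence "?c + 1 \<le> succ S ?c" using succP by auto
    hence "real ?c + 1 \<le> real (succ S ?c)" by linarith
    then show ?thesis using True by (simp add: B_def)
  qed (use r cn in \<open>auto simp: B_def\<close>)
  have AB: "A * B \<ge> 1 * 1" using A1 B1 by (intro mult_mono) auto
  show "HVC (-r, -r) (OneMinMax n) P x \<ge> ereal 1" using H AB by simp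
  show "tight S ?c \<Longrightarrow> HVC (-r, -r) (OneMinMax n) P x = ereal 1"
  proof -
    assume t: "tight S ?c"
    have "?c - 1 \<in> S \<and> ?c - 1 < ?c" "?c + 1 \<in> S \<and> ?c < ?c + 1" using t by (auto simp: tight_def)
    hence hl: "\<exists>s\<in>S. s < ?c" and hr: "\<exists>s\<in>S. ?c < s" by blast+
    have "pred S ?c = ?c - 1" using t finS by (intro pred_eq) (auto simp: tight_def)
    moreover have "succ S ?c = ?c + 1" using t finS by (intro succ_eq) (auto simp: tight_def)
    ultimately have "A = 1" "B = 1" using hl hr t by (auto simp: A_def B_def tight_def of_nat_diff)
    thus ?thesis using H by simp
  qed
  show "HVC (-r, -r) (OneMinMax n) P x = ereal 1 \<Longrightarrow> w n S ?c = 0"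
  proof -
    assume "HVC (-r, -r) (OneMinMax n) P x = ereal 1"
    hence "A * B = 1" using H by simp
    hence Ae: "A = 1" and Be: "B = 1"
    proof -
      show "A = 1"
      proof (rule ccontr)
        assume "A \<noteq> 1" hence "A > 1" using A1 by simp
        hence "A * B > 1 * B" using B1 by (intro mult_strict_right_mono) auto
        thus False using \<open>A * B = 1\<close> B1 by simp
      qed
      show "B = 1"
      proof (rule ccontr)
        assume "B \<noteq> 1" hence "B > 1" using B1 by simp
        hence "A * B > A * 1" using A1 by (intro mult_strict_left_mono) auto
        thus False using \<open>A * B = 1\<close> A1 by simp
      qed
    qed
    have t1: "?c - 1 \<in> S"
    proof (cases "\<exists>s\<in>S. s < ?c")
      case True
      hence "real ?c - real (pred S ?c) = 1" using Ae by (simp add: A_def)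
      hence "pred S ?c = ?c - 1" by linarith
      thus ?thesis using predP True by metis
    next
      case False
      hence "real ?c + r = 1" using Ae by (simp add: A_def)
      hence "?c = 0" using r by linarith
      thus ?thesis using x by (simp add: S_def)
    qed
    have t2: "?c + 1 \<in> S \<or> ?c = n"
    proof (cases "\<exists>s\<in>S. ?c < s")
      case True
      hence "real (succ S ?c) - real ?c = 1" using Be by (simp add: B_def)
      hence "succ S ?c = ?c + 1" by linarith
      thus ?thesis using succP True by metis
    next
      case False
      hence "real n - real ?c + r = 1" using Be by (simp add: B_def)
      hence "?c = n" using r cn by linarith
      thus ?thesis by simp
    qed
    show ?thesis using t1 t2 by (auto simp: w_def)
  qed
qed

lemma predP: "finite S \<Longrightarrow> \<exists>s\<in>S. s < c \<Longrightarrow> pred S c \<in> S \<and> pred S c < c \<and> (\<forall>t\<in>S. t < c \<longrightarrow> t \<le> pred S c)"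
proof -
  assume a: "finite S" "\<exists>s\<in>S. s < c"
  have "pred S c \<in> {s\<in>S. s < c}" unfolding pred_def using a by (intro Max_in) auto
  moreover have "\<forall>t\<in>S. t < c \<longrightarrow> t \<le> pred S c" unfolding pred_def using a by auto
  ultimately show ?thesis by simp
qed

lemma succP: "finite S \<Longrightarrow> \<exists>s\<in>S. c < s \<Longrightarrow> succ S c \<in> S \<and> c < succ S c \<and> (\<forall>t\<in>S. c < t \<longrightarrow> succ S c \<le> t)"
proof -
  assume a: "finite S" "\<exists>s\<in>S. c < s"
  have "succ S c \<in> {s\<in>S. c < s}" unfolding succ_def using a by (intro Min_in) auto
  moreover have "\<forall>t\<in>S. c < t \<longrightarrow> succ S c \<le> t" unfolding succ_def using a by auto
  ultimately show ?thesis by simp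
qed

lemma CDC_facts:
  assumes finP: "finite P" and inj: "inj_on cnt P" and y: "y \<in> P" and ty: "tight (cnt ` P) (cnt y)" and x: "x \<in> P"
  defines "V \<equiv> ereal (2 * (2 / (real (Max (cnt ` P)) - real (Min (cnt ` P)))))"
  shows "tight (cnt ` P) (cnt x) \<Longrightarrow> CDC (OneMinMax n) P x = V"
    "\<not> tight (cnt ` P) (cnt x) \<Longrightarrow> CDC (OneMinMax n) P x > V"
proof -
  let ?S = "cnt ` P" and ?c = "cnt x"
  have finS: "finite ?S" using finP by simp
  have "cnt y - 1 \<in> ?S" "cnt y + 1 \<in> ?S" "cnt y \<ge> 1" using ty by (auto simp: tight_def)
  hence "Min ?S \<le> cnt y - 1" "cnt y + 1 \<le> Max ?S" using finS by auto
  hence ba: "real (Max ?S) - real (Min ?S) > 0" using \<open>cnt y \<ge> 1\<close> by linarith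
  show "tight ?S ?c \<Longrightarrow> CDC (OneMinMax n) P x = V"
  proof -
    assume t: "tight ?S ?c"
    have "?c - 1 \<in> ?S \<and> ?c - 1 < ?c" "?c + 1 \<in> ?S \<and> ?c < ?c + 1" using t by (auto simp: tight_def)
    hence hl: "\<exists>s\<in>?S. s < ?c" and hr: "\<exists>s\<in>?S. ?c < s" by blast+
    have "pred ?S ?c = ?c - 1" using t finS by (intro pred_eq) (auto simp: tight_def)
    moreover have "succ ?S ?c = ?c + 1" using t finS by (intro succ_eq) (auto simp: tight_def)
    moreover have "real (?c + 1) - real (?c - 1) = 2" using t by (auto simp: tight_def of_nat_diff)
    ultimately show ?thesis using hl hr by (simp add: CDC_cnt[OF finP inj x] V_def)
  qed
  show "\<not> tight ?S ?c \<Longrightarrow> CDC (OneMinMax n) P x > V"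
  proof -
    assume nt: "\<not> tight ?S ?c"
    show ?thesis
    proof (cases "(\<exists>s\<in>?S. s < ?c) \<and> (\<exists>s\<in>?S. ?c < s)")
      case False
      have "CDC (OneMinMax n) P x = (if (\<exists>s\<in>?S. s < ?c) \<and> (\<exists>s\<in>?S. ?c < s)
     then ereal (2 * ((real (succ ?S ?c) - real (pred ?S ?c)) / (real (Max ?S) - real (Min ?S))))
     else \<infinity>)" by (rule CDC_cnt[OF finP inj x])
      also have "\<dots> = \<infinity>" by (rule if_not_P[OF False])
      finally show ?thesis by (simp add: V_def)
    next
      case True
      have p: "pred ?S ?c \<in> ?S" "pred ?S ?c < ?c" using predP[OF finS] True by auto
      have s: "succ ?S ?c \<in> ?S" "?c < succ ?S ?c" using succP[OF finS] True by auto
      have "succ ?S ?c \<ge> pred ?S ?c + 3"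
      proof (rule ccontr)
        assume "\<not> succ ?S ?c \<ge> pred ?S ?c + 3"
        hence "pred ?S ?c = ?c - 1" "succ ?S ?c = ?c + 1" using p s by auto
        hence "tight ?S ?c" using p s by (auto simp: tight_def)
        thus False using nt by simp
      qed
      hence d: "real (succ ?S ?c) - real (pred ?S ?c) \<ge> 3" by linarith
      have "2 / (real (Max ?S) - real (Min ?S)) < (real (succ ?S ?c) - real (pred ?S ?c)) / (real (Max ?S) - real (Min ?S))"
        using d ba by (intro divide_strict_right_mono) auto
      hence lt: "2 * (2 / (real (Max ?S) - real (Min ?S))) < 2 * ((real (succ ?S ?c) - real (pred ?S ?c)) / (real (Max ?S) - real (Min ?S)))"
        by linarith
      have "CDC (OneMinMax n) P x = (if (\<exists>s\<in>?S. s < ?c) \<and> (\<exists>s\<in>?S. ?c < s)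
     then ereal (2 * ((real (succ ?S ?c) - real (pred ?S ?c)) / (real (Max ?S) - real (Min ?S))))
     else \<infinity>)" by (rule CDC_cnt[OF finP inj x])
      also have "\<dots> = ereal (2 * ((real (succ ?S ?c) - real (pred ?S ?c)) / (real (Max ?S) - real (Min ?S))))"
        by (rule if_P[OF True])
      finally show ?thesis unfolding V_def using lt by simp
    qed
  qed
qed

lemma caseII_avg:
  assumes finP: "finite P" and inj: "inj_on cnt P" and Sn: "cnt ` P \<subseteq> {..n}" and n1: "n \<ge> 1"
    and AP: "A \<subseteq> P" and Ane: "A \<noteq> {}"
    and Ant: "\<And>x. x \<in> A \<Longrightarrow> \<not> tight (cnt ` P) (cnt x)"
    and Aw: "\<And>x. x \<in> P \<Longrightarrow> w n (cnt ` P) (cnt x) > 0 \<Longrightarrow> x \<in> A"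
    and g: "\<And>x. x \<in> A \<Longrightarrow> g x \<ge> real (w n (cnt ` P) (cnt x)) / (9 * real n)"
  shows "(\<Sum>x\<in>A. g x) / real (card A) \<ge> real (n + 1 - card (cnt ` P)) / (72 * real n)"
proof -
  let ?S = "cnt ` P"
  define NTP where "NTP = {x\<in>P. \<not> tight ?S (cnt x)}"
  define NT where "NT = {c\<in>?S. \<not> tight ?S c}"
  have finA: "finite A" using finP AP finite_subset by blast
  have finNTP: "finite NTP" using finP by (simp add: NTP_def)
  have ANTP: "A \<subseteq> NTP" using AP Ant by (auto simp: NTP_def)
  have NTimg: "cnt ` NTP = NT" by (auto simp: NTP_def NT_def)
  have injN: "inj_on cnt NTP" using inj by (rule inj_on_subset) (auto simp: NTP_def)
  have Pne: "P \<noteq> {}" using Ane AP by auto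
  have comb': "8 * (\<Sum>c\<in>NT. w n ?S c) \<ge> card NT * (n + 1 - card ?S)"
    unfolding NT_def by (rule comb[OF Sn]) (use Pne in auto)
  have sumA: "(\<Sum>x\<in>A. w n ?S (cnt x)) = (\<Sum>x\<in>NTP. w n ?S (cnt x))"
  proof (rule sum.mono_neutral_left[OF finNTP ANTP])
    show "\<forall>x\<in>NTP - A. w n ?S (cnt x) = 0" using Aw by (auto simp: NTP_def)
  qed
  also have "\<dots> = (\<Sum>c\<in>NT. w n ?S c)" using sum.reindex[OF injN, of "w n ?S"] NTimg by simp
  finally have sumA': "(\<Sum>x\<in>A. w n ?S (cnt x)) = (\<Sum>c\<in>NT. w n ?S c)" .
  have cA: "card A \<le> card NT" using card_mono[OF finNTP ANTP] card_image[OF injN] NTimg by simp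
  have cA1: "card A \<ge> 1" using finA Ane by (simp add: Suc_leI card_gt_0_iff)
  define W where "W = real (\<Sum>c\<in>NT. w n ?S c)"
  define m where "m = real (n + 1 - card ?S)"
  have W0: "W \<ge> 0" by (simp only: W_def of_nat_0_le_iff)
  have Wm: "8 * W \<ge> real (card NT) * m"
    using comb' unfolding W_def m_def by (metis of_nat_le_iff of_nat_mult of_nat_numeral)
  have "(\<Sum>x\<in>A. g x) \<ge> (\<Sum>x\<in>A. real (w n ?S (cnt x)) / (9 * real n))" by (rule sum_mono) (rule g)
  also have "(\<Sum>x\<in>A. real (w n ?S (cnt x)) / (9 * real n)) = (\<Sum>x\<in>A. real (w n ?S (cnt x))) / (9 * real n)"
    by (simp add: sum_divide_distrib)
  also have "(\<Sum>x\<in>A. real (w n ?S (cnt x))) = W"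
    unfolding W_def by (simp only: of_nat_sum[symmetric] sumA')
  finally have sg: "(\<Sum>x\<in>A. g x) \<ge> W / (9 * real n)" .
  have pos: "real (card A) > 0" using cA1 by simp
  have "(\<Sum>x\<in>A. g x) / real (card A) \<ge> (W / (9 * real n)) / real (card A)"
    using sg pos by (intro divide_right_mono) auto
  also have "(W / (9 * real n)) / real (card A) \<ge> (W / (9 * real n)) / real (card NT)"
    using cA pos W0 n1 by (intro divide_left_mono) auto
  also have "(W / (9 * real n)) / real (card NT) \<ge> m / (72 * real n)"
  proof -
    have cN: "real (card NT) > 0" using cA cA1 by simp
    have "(W / (9 * real n)) / real (card NT) = W / (9 * real n * real (card NT))" by simp
    moreover have "m / (72 * real n) = (real (card NT) * m) / (72 * real n * real (card NT))" using cN by simp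
    moreover have "(real (card NT) * m) / (72 * real n * real (card NT)) \<le> (8 * W) / (72 * real n * real (card NT))"
      using Wm cN n1 by (intro divide_right_mono) auto
    moreover have "(8 * W) / (72 * real n * real (card NT)) = W / (9 * real n * real (card NT))" by simp
    ultimately show ?thesis by linarith
  qed
  finally show ?thesis unfolding m_def .
qed

definition Inv :: "nat \<Rightarrow> bool list set \<Rightarrow> bool" where
  "Inv n P \<longleftrightarrow> finite P \<and> P \<noteq> {} \<and> (\<forall>x\<in>P. length x = n) \<and> inj_on cnt P"

definition Intv :: "nat set \<Rightarrow> bool" where
  "Intv S \<longleftrightarrow> (\<forall>i\<in>S. \<forall>j\<in>S. \<forall>v. i \<le> v \<longrightarrow> v \<le> j \<longrightarrow> v \<in> S)"

definition goodD :: "(objf \<Rightarrow> pop \<Rightarrow> indiv \<Rightarrow> ereal) \<Rightarrow> bool" where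
  "goodD D \<longleftrightarrow> D = CDC \<or> (\<exists>r\<ge>1. D = HVC (-r, -r))"

lemma w_single: "c \<le> n \<Longrightarrow> w n {c} c = n"
  by (cases c) (auto simp: w_def)

lemma w_pair: "a + 1 \<le> n \<Longrightarrow> w n {a, a+1} a = a \<and> w n {a, a+1} (a+1) = n - (a+1)"
  by (cases a) (auto simp: w_def)

lemma tight_w: "tight S c \<Longrightarrow> w n S c = 0"
  by (auto simp: tight_def w_def)

lemma two_avg:
  fixes h :: "bool list \<Rightarrow> real"
  assumes P: "P = {x0, x1}" "x0 \<noteq> x1"
    and mono: "\<And>x y. x \<in> P \<Longrightarrow> y \<in> P \<Longrightarrow> Dv x < Dv y \<Longrightarrow> h x \<le> h y"
  shows "(\<Sum>x\<in>selset Dv P. h x) / real (card (selset Dv P)) \<ge> (h x0 + h x1) / 2"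
proof (cases "differ Dv P")
  case False
  then show ?thesis using selset_eq2[OF False] P by simp
next
  case True
  hence ne: "Dv x0 \<noteq> Dv x1" using P unfolding differ_def by auto
  show ?thesis
  proof (cases "Dv x0 < Dv x1")
    case True
    have "selset Dv P = {x\<in>P. Dv x \<noteq> Dv x0}"
      by (rule selset_min) (use P True ne in auto)
    also have "\<dots> = {x1}" using P ne by auto
    finally show ?thesis using mono[of x0 x1] True P by simp
  next
    case False
    hence lt: "Dv x1 < Dv x0" using ne by simp
    have "selset Dv P = {x\<in>P. Dv x \<noteq> Dv x1}"
      by (rule selset_min) (use P lt ne in auto)
    also have "\<dots> = {x0}" using P ne by auto
    finally show ?thesis using mono[of x1 x0] lt P by simp
  qed
qed


lemma progress:
  assumes inv: "Inv n P" and nc: "card (cnt ` P) < n + 1" and n4: "n \<ge> 4"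
    and mut: "is_mut mut" and gD: "goodD D" and iv: "mut = semo_mut \<longrightarrow> Intv (cnt ` P)"
  shows "ennreal (real (n + 1 - card (cnt ` P)) / (288 * real n)) \<le>
         (\<integral>\<^sup>+x. ennreal (measure_pmf.prob (mut n x) {s'. cnt s' \<notin> cnt ` P}) \<partial>measure_pmf (NMUAR (D (OneMinMax n)) P))"
proof -
  let ?S = "cnt ` P"
  define g where "g x = measure_pmf.prob (mut n x) {s'. cnt s' \<notin> ?S}" for x
  define A where "A = selset (D (OneMinMax n) P) P"
  define m where "m = real (n + 1 - card ?S)"
  have finP: "finite P" and Pne: "P \<noteq> {}" and len: "\<And>x. x \<in> P \<Longrightarrow> length x = n" and inj: "inj_on cnt P"
    using inv by (auto simp: Inv_def)
  have finS: "finite ?S" using finP by simp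
  have Sn: "?S \<subseteq> {..n}" using len cnt_le by fastforce
  have cS1: "card ?S \<ge> 1" using finS Pne by (simp add: Suc_leI card_gt_0_iff)
  have mn: "m \<le> real n" using cS1 by (simp add: m_def)
  have m0: "m \<ge> 0" by (simp add: m_def)
  have nmu: "NMUAR (D (OneMinMax n)) P = pmf_of_set A" by (simp add: A_def NMUAR_selset)
  have Ap: "A \<noteq> {}" "A \<subseteq> P" "finite A" using selset_props[OF finP Pne] by (auto simp: A_def)
  have g0: "\<And>x. g x \<ge> 0" by (simp add: g_def)
  have gw: "g x \<ge> real (w n ?S (cnt x)) / (9 * real n)" if "x \<in> P" for x
    unfolding g_def by (rule mut_w[OF mut]) (use n4 len that in auto)
  have int_eq: "(\<integral>\<^sup>+x. ennreal (g x) \<partial>measure_pmf (NMUAR (D (OneMinMax n)) P)) = ennreal ((\<Sum>x\<in>A. g x) / real (card A))"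
    unfolding nmu using Ap g0 by (intro nn_avg) auto
  have goal: "ennreal (m / (288 * real n)) \<le> ennreal ((\<Sum>x\<in>A. g x) / real (card A))"
  proof (cases "\<exists>y\<in>P. tight ?S (cnt y)")
    case True
    then obtain y where y: "y \<in> P" "tight ?S (cnt y)" by blast
    obtain x0 where x0: "x0 \<in> P" "cnt x0 = Min ?S" using exMin[OF finP Pne] by blast
    have x0nt: "\<not> tight ?S (cnt x0)"
    proof
      assume "tight ?S (cnt x0)"
      hence "cnt x0 - 1 \<in> ?S" "cnt x0 \<ge> 1" by (auto simp: tight_def)
      hence "Min ?S \<le> cnt x0 - 1" using finS by simp
      thus False using x0 \<open>cnt x0 \<ge> 1\<close> by simp
    qed
    have props: "(\<forall>x\<in>A. \<not> tight ?S (cnt x)) \<and> (\<forall>x\<in>P. w n ?S (cnt x) > 0 \<longrightarrow> x \<in> A)"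
    proof (cases "D = CDC")
      case True
      define V where "V = ereal (2 * (2 / (real (Max ?S) - real (Min ?S))))"
      have Vt: "\<And>x. x \<in> P \<Longrightarrow> tight ?S (cnt x) \<Longrightarrow> CDC (OneMinMax n) P x = V"
        unfolding V_def by (rule CDC_facts(1)[OF finP inj y(1) y(2)])
      have Vn: "\<And>x. x \<in> P \<Longrightarrow> \<not> tight ?S (cnt x) \<Longrightarrow> CDC (OneMinMax n) P x > V"
        unfolding V_def by (rule CDC_facts(2)[OF finP inj y(1) y(2)])
      have Aform: "A = {x\<in>P. CDC (OneMinMax n) P x \<noteq> CDC (OneMinMax n) P y}"
        unfolding A_def True
      proof (rule selset_min[OF finP y(1)])
        show "\<forall>x\<in>P. CDC (OneMinMax n) P y \<le> CDC (OneMinMax n) P x"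
        proof
          fix x assume xP: "x \<in> P"
          have Vy: "CDC (OneMinMax n) P y = V" by (rule Vt[OF y])
          show "CDC (OneMinMax n) P y \<le> CDC (OneMinMax n) P x"
          proof (cases "tight ?S (cnt x)")
            case True thus ?thesis using Vt[OF xP] Vy by simp
          next
            case False thus ?thesis using Vn[OF xP] Vy by simp
          qed
        qed
        show "\<exists>x\<in>P. CDC (OneMinMax n) P x \<noteq> CDC (OneMinMax n) P y"
          using Vt[OF y] Vn[OF x0(1) x0nt] x0(1) by (intro bexI[of _ x0]) auto
      qed
      have Aeq: "x \<in> A \<longleftrightarrow> x \<in> P \<and> \<not> tight ?S (cnt x)" for x
      proof (cases "x \<in> P")
        case xP: True
        have Vy: "CDC (OneMinMax n) P y = V" by (rule Vt[OF y])
        show ?thesis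
        proof (cases "tight ?S (cnt x)")
          case True thus ?thesis using Vt[OF xP] Vy Aform by simp
        next
          case False thus ?thesis using Vn[OF xP] Vy Aform xP by auto
        qed
      next
        case False thus ?thesis using Aform by simp
      qed
      show ?thesis
      proof (intro conjI ballI impI)
        fix x assume "x \<in> A" thus "\<not> tight ?S (cnt x)" using Aeq by simp
      next
        fix x assume "x \<in> P" "w n ?S (cnt x) > 0"
        hence "\<not> tight ?S (cnt x)" using tight_w[of ?S "cnt x" n] by auto
        thus "x \<in> A" using Aeq \<open>x \<in> P\<close> by simp
      qed
    next
      case False
      then obtain r where r: "r \<ge> 1" "D = HVC (-r, -r)" using gD by (auto simp: goodD_def)
      let ?H = "HVC (-r, -r) (OneMinMax n) P"
      have cn: "cnt x \<le> n" if xP: "x \<in> P" for x using cnt_le[of x] len[OF xP] by simp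
      have H1: "\<And>x. x \<in> P \<Longrightarrow> tight ?S (cnt x) \<Longrightarrow> ?H x = ereal 1"
        using HVC_facts(1)[OF finP inj _ r(1) cn] by blast
      have H2: "\<And>x. x \<in> P \<Longrightarrow> ?H x \<ge> ereal 1"
        using HVC_facts(2)[OF finP inj _ r(1) cn] by blast
      have H3: "\<And>x. x \<in> P \<Longrightarrow> ?H x = ereal 1 \<Longrightarrow> w n ?S (cnt x) = 0"
        using HVC_facts(3)[OF finP inj _ r(1) cn] by blast
      have exw: "\<exists>x\<in>P. w n ?S (cnt x) > 0"
      proof (rule ccontr)
        assume "\<not> (\<exists>x\<in>P. w n ?S (cnt x) > 0)"
        hence z: "\<And>c. c \<in> ?S \<Longrightarrow> w n ?S c = 0" by auto
        have "8 * (\<Sum>c\<in>{c\<in>?S. \<not> tight ?S c}. w n ?S c) \<ge> card {c\<in>?S. \<not> tight ?S c} * (n + 1 - card ?S)"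
          by (rule comb[OF Sn]) (use Pne in auto)
        moreover have "(\<Sum>c\<in>{c\<in>?S. \<not> tight ?S c}. w n ?S c) = 0" using z by simp
        moreover have "card {c\<in>?S. \<not> tight ?S c} \<ge> 1"
        proof -
          have mem: "cnt x0 \<in> {c\<in>?S. \<not> tight ?S c}" using imageI[OF x0(1), of cnt] x0nt by blast
          have "finite {c\<in>?S. \<not> tight ?S c}" using finS by simp
          hence "card {c\<in>?S. \<not> tight ?S c} > 0" using mem by (auto simp: card_gt_0_iff)
          thus ?thesis by simp
        qed
        moreover have "n + 1 - card ?S \<ge> 1" using nc by simp
        ultimately show False
        proof -
          assume h1: "card {c\<in>?S. \<not> tight ?S c} * (n + 1 - card ?S) \<le> 8 * (\<Sum>c\<in>{c\<in>?S. \<not> tight ?S c}. w n ?S c)"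
            and h2: "(\<Sum>c\<in>{c\<in>?S. \<not> tight ?S c}. w n ?S c) = 0"
            and h3: "1 \<le> card {c\<in>?S. \<not> tight ?S c}" and h4: "1 \<le> n + 1 - card ?S"
          have "1 * 1 \<le> card {c\<in>?S. \<not> tight ?S c} * (n + 1 - card ?S)" using h3 h4 by (rule mult_le_mono)
          thus False using h1 h2 by simp
        qed
      qed
      then obtain x1 where x1: "x1 \<in> P" "w n ?S (cnt x1) > 0" by blast
      have "A = {x\<in>P. ?H x \<noteq> ?H y}"
        unfolding A_def r(2)
      proof (rule selset_min[OF finP y(1)])
        show "\<forall>x\<in>P. ?H y \<le> ?H x" using H1[OF y] H2 by simp
        show "\<exists>x\<in>P. ?H x \<noteq> ?H y" using H1[OF y] H3[OF x1(1)] x1 by (intro bexI[of _ x1]) auto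
      qed
      hence Aeq: "A = {x\<in>P. ?H x \<noteq> ereal 1}" using H1[OF y] by simp
      show ?thesis
      proof (intro conjI ballI impI)
        fix x assume "x \<in> A" thus "\<not> tight ?S (cnt x)" using Aeq H1 by auto
      next
        fix x assume "x \<in> P" "w n ?S (cnt x) > 0" thus "x \<in> A" using Aeq H3 by fastforce
      qed
    qed
    have avg: "(\<Sum>x\<in>A. g x) / real (card A) \<ge> m / (72 * real n)"
      unfolding m_def
    proof (rule caseII_avg[OF finP inj Sn _ Ap(2) Ap(1)])
      show "1 \<le> n" using n4 by simp
      show "\<And>x. x \<in> A \<Longrightarrow> \<not> tight ?S (cnt x)" using props by blast
      show "\<And>x. x \<in> P \<Longrightarrow> 0 < w n ?S (cnt x) \<Longrightarrow> x \<in> A" using props by blast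
      show "\<And>x. x \<in> A \<Longrightarrow> real (w n ?S (cnt x)) / (9 * real n) \<le> g x" using gw Ap(2) by blast
    qed
    moreover have "m / (288 * real n) \<le> m / (72 * real n)" using m0 n4 by (intro divide_left_mono) auto
    ultimately show ?thesis by (intro ennreal_leI) linarith
  next
    case notight: False
    show ?thesis
    proof (cases "mut = gsemo_mut")
      case True
      have gI: "g x \<ge> 1 / 144" if xP: "x \<in> P" for x
      proof -
        let ?c = "cnt x"
        have cS: "?c \<in> ?S" using xP by simp
        have nt: "\<And>c. c \<in> ?S \<Longrightarrow> \<not> tight ?S c" using notight by auto
        show ?thesis
        proof (cases "2 * ?c \<le> n")
          case True
          have dj: "?c + 1 \<notin> ?S \<or> ?c + 2 \<notin> ?S"
          proof (rule ccontr)
            assume "\<not> (?c + 1 \<notin> ?S \<or> ?c + 2 \<notin> ?S)"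
            hence "tight ?S (?c + 1)" "?c + 1 \<in> ?S" using cS by (auto simp: tight_def)
            thus False using nt by blast
          qed
          show ?thesis unfolding g_def \<open>mut = gsemo_mut\<close> by (rule gsemo_caseI_up[OF n4 len[OF xP] True dj])
        next
          case False
          hence c2: "?c \<ge> 2" using n4 by simp
          have dj: "?c - 1 \<notin> ?S \<or> ?c - 2 \<notin> ?S"
          proof (rule ccontr)
            assume a: "\<not> (?c - 1 \<notin> ?S \<or> ?c - 2 \<notin> ?S)"
            have e1: "?c - 1 - 1 = ?c - 2" "?c - 1 + 1 = ?c" "?c - 1 \<ge> 1" using c2 by auto
            have "?c - 2 \<in> ?S" using a by blast
            hence "tight ?S (?c - 1)" using cS e1 unfolding tight_def by simp
            moreover have "?c - 1 \<in> ?S" using a by simp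
            ultimately show False using nt by blast
          qed
          have c2n: "2 * ?c \<ge> n" using False by simp
          show ?thesis unfolding g_def \<open>mut = gsemo_mut\<close> by (rule gsemo_caseI_down[OF n4 len[OF xP] c2n dj])
        qed
      qed
      have "(\<Sum>x\<in>A. g x) \<ge> (\<Sum>x\<in>A. 1 / 144)" using gI Ap(2) by (intro sum_mono) auto
      hence s1: "(\<Sum>x\<in>A. g x) \<ge> real (card A) / 144" by simp
      have cA: "real (card A) > 0" using Ap by (simp add: card_gt_0_iff)
      have "(\<Sum>x\<in>A. g x) / real (card A) \<ge> (real (card A) / 144) / real (card A)"
        using s1 cA by (intro divide_right_mono) auto
      hence "(\<Sum>x\<in>A. g x) / real (card A) \<ge> 1 / 144" using cA by simp
      moreover have "m / (288 * real n) \<le> 1 / 144"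
      proof -
        have "m / (288 * real n) \<le> real n / (288 * real n)" using mn n4 by (intro divide_right_mono) auto
        also have "\<dots> = 1 / 288" using n4 by simp
        finally show ?thesis by simp
      qed
      ultimately show ?thesis by (intro ennreal_leI) linarith
    next
      case False
      hence semo: "mut = semo_mut" using mut by (simp add: is_mut_def)
      hence ivS: "Intv ?S" using iv by simp
      define a where "a = Min ?S"
      have aS: "a \<in> ?S" using finS Pne by (simp add: a_def)
      have amin: "\<And>s. s \<in> ?S \<Longrightarrow> a \<le> s" using finS by (simp add: a_def)
      have cS2: "card ?S \<le> 2"
      proof (rule ccontr)
        assume "\<not> card ?S \<le> 2"
        hence c3: "card ?S \<ge> 3" by simp
        have "\<exists>s\<in>?S. s \<ge> a + 2"
        proof (rule ccontr)
          assume "\<not> (\<exists>s\<in>?S. s \<ge> a + 2)"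
          hence "?S \<subseteq> {a, a + 1}" using amin by force
          hence "card ?S \<le> card {a, a+1}" by (intro card_mono) auto
          also have "\<dots> \<le> 2" by (simp add: card_insert_le_m1)
          finally show False using c3 by simp
        qed
        then obtain s where s: "s \<in> ?S" "s \<ge> a + 2" by blast
        have "a + 1 \<in> ?S" "a + 2 \<in> ?S" using ivS aS s unfolding Intv_def by auto
        hence "tight ?S (a + 1)" using aS by (auto simp: tight_def)
        thus False using notight \<open>a + 1 \<in> ?S\<close> by auto
      qed
      show ?thesis
      proof (cases "card ?S = 1")
        case True
        then obtain c where Sc: "?S = {c}" by (auto simp: card_Suc_eq)
        obtain x where xP: "x \<in> P" using Pne by blast
        have Px: "P = {x}"
        proof -
          have "card P = 1" using card_image[OF inj] True by simp
          then obtain z where "P = {z}" by (rule card_1_singletonE)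
          thus ?thesis using xP by simp
        qed
        have Ax: "A = {x}" using Ap Px by auto
        have cx: "cnt x = c" using Sc xP by auto
        have "c \<le> n" using Sn Sc by auto
        hence "w n ?S (cnt x) = n" using Sc cx w_single by simp
        hence "g x \<ge> real n / (9 * real n)" using gw[OF xP] by simp
        hence "g x \<ge> 1 / 9" using n4 by simp
        moreover have "m / (288 * real n) \<le> 1 / 9"
        proof -
          have "m / (288 * real n) \<le> real n / (288 * real n)" using mn n4 by (intro divide_right_mono) auto
          also have "\<dots> = 1 / 288" using n4 by simp
          finally show ?thesis by simp
        qed
        ultimately show ?thesis using Ax by (intro ennreal_leI) simp
      next
        case False
        hence c2: "card ?S = 2" using cS2 cS1 by simp
        have a1: "a + 1 \<in> ?S"
        proof -
          have "\<exists>s\<in>?S. s \<noteq> a"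
          proof (rule ccontr)
            assume "\<not> (\<exists>s\<in>?S. s \<noteq> a)"
            hence "?S \<subseteq> {a}" by auto
            hence "card ?S \<le> card {a}" by (intro card_mono) auto
            thus False using c2 by simp
          qed
          then obtain s where s: "s \<in> ?S" "s \<noteq> a" by blast
          hence "a < s" using amin[OF s(1)] by simp
          thus ?thesis using ivS aS s unfolding Intv_def by auto
        qed
        have Seq: "?S = {a, a + 1}"
        proof -
          have "{a, a+1} \<subseteq> ?S" using aS a1 by auto
          moreover have "card {a, a+1} = card ?S" using c2 by simp
          ultimately show ?thesis using card_subset_eq[OF finS] by metis
        qed
        obtain x0 where x0: "x0 \<in> P" "cnt x0 = a" using aS by auto
        obtain x1 where x1: "x1 \<in> P" "cnt x1 = a + 1" using a1 by auto
        have Peq: "P = {x0, x1}"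
        proof
          show "{x0, x1} \<subseteq> P" using x0 x1 by auto
          show "P \<subseteq> {x0, x1}"
          proof
            fix z assume "z \<in> P"
            hence "cnt z = a \<or> cnt z = a + 1" using Seq by auto
            thus "z \<in> {x0, x1}"
            proof
              assume "cnt z = a" hence "cnt z = cnt x0" using x0 by simp
              hence "z = x0" using inj_onD[OF inj _ \<open>z \<in> P\<close> x0(1)] by simp
              thus ?thesis by simp
            next
              assume "cnt z = a + 1" hence "cnt z = cnt x1" using x1 by simp
              hence "z = x1" using inj_onD[OF inj _ \<open>z \<in> P\<close> x1(1)] by simp
              thus ?thesis by simp
            qed
          qed
        qed
        have x01: "x0 \<noteq> x1" using x0 x1 by auto
        have an: "a + 1 \<le> n" using Sn a1 by auto
        have wa: "w n ?S a = a" "w n ?S (a+1) = n - (a+1)" using w_pair[OF an] Seq by auto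
        define h where "h x = real (w n ?S (cnt x))" for x
        have hsum: "h x0 + h x1 = real n - 1" using wa x0 x1 an by (simp add: h_def of_nat_diff)
        have mono: "\<And>x y. x \<in> P \<Longrightarrow> y \<in> P \<Longrightarrow> D (OneMinMax n) P x < D (OneMinMax n) P y \<Longrightarrow> h x \<le> h y"
        proof (cases "D = CDC")
          case True
          fix x y assume "x \<in> P" "y \<in> P" "D (OneMinMax n) P x < D (OneMinMax n) P y"
          moreover have "\<And>z. z \<in> P \<Longrightarrow> CDC (OneMinMax n) P z = \<infinity>"
          proof -
            fix z assume zP: "z \<in> P"
            have "\<not> ((\<exists>s\<in>?S. s < cnt z) \<and> (\<exists>s\<in>?S. cnt z < s))"
              using Seq zP by auto
            thus "CDC (OneMinMax n) P z = \<infinity>" by (subst CDC_cnt[OF finP inj zP]) simp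
          qed
          ultimately show "h x \<le> h y" using True by simp
        next
          case False
          then obtain r where r: "r \<ge> 1" "D = HVC (-r, -r)" using gD by (auto simp: goodD_def)
          have Hv: "HVC (-r, -r) (OneMinMax n) P z = ereal (h z + r)" if zP: "z \<in> P" for z
          proof -
            have fS: "finite ?S" by (rule finS)
            have "z = x0 \<or> z = x1" using Peq zP by auto
            thus ?thesis
            proof
              assume z: "z = x0"
              have nl: "\<not> (\<exists>s\<in>?S. s < cnt z)" using Seq z x0 by auto
              have hr: "\<exists>s\<in>?S. cnt z < s" using Seq z x0 by auto
              have "succ ?S (cnt z) = a + 1" using Seq z x0 by (intro succ_eq) auto
              hence "HVC (-r, -r) (OneMinMax n) P z = ereal ((real a + r) * 1)"
                using nl hr z x0 by (subst HVC_cnt[OF finP inj zP]) simp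
              thus ?thesis using z x0 wa by (simp add: h_def)
            next
              assume z: "z = x1"
              have hl: "\<exists>s\<in>?S. s < cnt z" using Seq z x1 by auto
              have nr: "\<not> (\<exists>s\<in>?S. cnt z < s)" using Seq z x1 by auto
              have "pred ?S (cnt z) = a" using Seq z x1 by (intro pred_eq) auto
              hence "HVC (-r, -r) (OneMinMax n) P z = ereal (1 * (real n - real (a + 1) + r))"
                using hl nr z x1 by (subst HVC_cnt[OF finP inj zP]) simp
              thus ?thesis using z x1 wa an by (simp add: h_def of_nat_diff)
            qed
          qed
          fix x y assume "x \<in> P" "y \<in> P" "D (OneMinMax n) P x < D (OneMinMax n) P y"
          thus "h x \<le> h y" using Hv r by simp
        qed
        have ta: "(\<Sum>x\<in>A. h x) / real (card A) \<ge> (h x0 + h x1) / 2"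
          unfolding A_def by (rule two_avg[OF Peq x01]) (use mono Peq in auto)
        have "(\<Sum>x\<in>A. g x) \<ge> (\<Sum>x\<in>A. h x / (9 * real n))"
          using gw Ap(2) by (intro sum_mono) (auto simp: h_def)
        also have "(\<Sum>x\<in>A. h x / (9 * real n)) = (\<Sum>x\<in>A. h x) / (9 * real n)" by (simp add: sum_divide_distrib)
        finally have sg: "(\<Sum>x\<in>A. g x) \<ge> (\<Sum>x\<in>A. h x) / (9 * real n)" .
        have cA: "real (card A) > 0" using Ap by (simp add: card_gt_0_iff)
        have "(\<Sum>x\<in>A. g x) / real (card A) \<ge> ((\<Sum>x\<in>A. h x) / (9 * real n)) / real (card A)"
          using sg cA by (intro divide_right_mono) auto
        also have "((\<Sum>x\<in>A. h x) / (9 * real n)) / real (card A) = ((\<Sum>x\<in>A. h x) / real (card A)) / (9 * real n)"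
          by simp
        also have "((\<Sum>x\<in>A. h x) / real (card A)) / (9 * real n) \<ge> ((real n - 1) / 2) / (9 * real n)"
          using ta hsum n4 by (intro divide_right_mono) auto
        finally have fin: "(\<Sum>x\<in>A. g x) / real (card A) \<ge> ((real n - 1) / 2) / (9 * real n)" .
        have "m = real n - 1" using c2 n4 by (simp add: m_def of_nat_diff)
        hence "m / (288 * real n) \<le> ((real n - 1) / 2) / (9 * real n)"
          using n4 by (simp add: field_simps)
        thus ?thesis using fin by (intro ennreal_leI) linarith
      qed
    qed
  qed
  show ?thesis using goal int_eq by (simp add: g_def m_def)
qed

abbreviation stp :: "nat \<Rightarrow> (nat \<Rightarrow> indiv \<Rightarrow> indiv pmf) \<Rightarrow> (objf \<Rightarrow> pop \<Rightarrow> indiv \<Rightarrow> ereal) \<Rightarrow> pop \<Rightarrow> pop pmf" where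
  "stp n mut D \<equiv> semo_step (OneMinMax n) (mut n) (D (OneMinMax n))"

definition Jinv :: "nat \<Rightarrow> (nat \<Rightarrow> indiv \<Rightarrow> indiv pmf) \<Rightarrow> pop \<Rightarrow> bool" where
  "Jinv n mut P \<longleftrightarrow> Inv n P \<and> (mut = semo_mut \<longrightarrow> Intv (cnt ` P))"

lemma cnt_update: "cnt ` update (OneMinMax n) P s' = insert (cnt s') (cnt ` P)"
  unfolding update_OMM by auto

lemma IntvD: "Intv S \<Longrightarrow> i \<in> S \<Longrightarrow> j \<in> S \<Longrightarrow> i \<le> v \<Longrightarrow> v \<le> j \<Longrightarrow> v \<in> S"
  unfolding Intv_def by blast

lemma Intv_insert:
  assumes "Intv S" "c \<in> S" "v = c + 1 \<or> v + 1 = c"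
  shows "Intv (insert v S)"
proof (cases "v \<in> S")
  case True then show ?thesis using assms(1) by (simp add: insert_absorb)
next
  case vS: False
  show ?thesis
  proof (cases "v = c + 1")
    case True
    have le: "\<And>s. s \<in> S \<Longrightarrow> s \<le> c"
    proof (rule ccontr)
      fix s assume "s \<in> S" "\<not> s \<le> c"
      hence "v \<in> S" using IntvD[OF assms(1,2) \<open>s \<in> S\<close>, of v] True by simp
      thus False using vS by simp
    qed
    show ?thesis unfolding Intv_def
    proof (intro ballI allI impI)
      fix i j u assume ij: "i \<in> insert v S" "j \<in> insert v S" "i \<le> u" "u \<le> j"
      show "u \<in> insert v S"
      proof (cases "u = v")
        case False
        have uc: "u \<le> c"
        proof (cases "j = v")
          case True thus ?thesis using ij False \<open>v = c + 1\<close> by simp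
        next
          case False thus ?thesis using ij le[of j] by simp
        qed
        have "i \<noteq> v" using uc ij \<open>v = c + 1\<close> by auto
        hence "i \<in> S" using ij by simp
        thus ?thesis using IntvD[OF assms(1) \<open>i \<in> S\<close> assms(2), of u] ij uc by simp
      qed simp
    qed
  next
    case False
    hence F: "v + 1 = c" using assms(3) by simp
    have ge: "\<And>s. s \<in> S \<Longrightarrow> c \<le> s"
    proof (rule ccontr)
      fix s assume "s \<in> S" "\<not> c \<le> s"
      hence "v \<in> S" using IntvD[OF assms(1) \<open>s \<in> S\<close> assms(2), of v] F by simp
      thus False using vS by simp
    qed
    show ?thesis unfolding Intv_def
    proof (intro ballI allI impI)
      fix i j u assume ij: "i \<in> insert v S" "j \<in> insert v S" "i \<le> u" "u \<le> j"
      show "u \<in> insert v S"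
      proof (cases "u = v")
        case False
        have uc: "c \<le> u"
        proof (cases "i = v")
          case True thus ?thesis using ij False F by simp
        next
          case False thus ?thesis using ij ge[of i] by simp
        qed
        have "j \<noteq> v" using uc ij F by auto
        hence "j \<in> S" using ij by simp
        thus ?thesis using IntvD[OF assms(1) assms(2) \<open>j \<in> S\<close>, of u] ij uc by simp
      qed simp
    qed
  qed
qed

lemma set_NMUAR: "finite P \<Longrightarrow> P \<noteq> {} \<Longrightarrow> set_pmf (NMUAR Dv P) \<subseteq> P"
  using selset_props[of P "Dv P"] by (simp add: NMUAR_selset set_pmf_of_set)

lemma step_set:
  "P' \<in> set_pmf (stp n mut D P) \<longleftrightarrow> (\<exists>x\<in>set_pmf (NMUAR (D (OneMinMax n)) P). \<exists>s'\<in>set_pmf (mut n x). P' = update (OneMinMax n) P s')"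
  by (auto simp: semo_step_def)

lemma Jinv_step:
  assumes J: "Jinv n mut P" and mut: "is_mut mut" and n1: "n \<ge> 1" and P': "P' \<in> set_pmf (stp n mut D P)"
  shows "Jinv n mut P'"
proof -
  have inv: "Inv n P" using J by (simp add: Jinv_def)
  hence finP: "finite P" and Pne: "P \<noteq> {}" and len: "\<And>x. x \<in> P \<Longrightarrow> length x = n" and inj: "inj_on cnt P"
    by (auto simp: Inv_def)
  obtain x s' where x: "x \<in> set_pmf (NMUAR (D (OneMinMax n)) P)" and s': "s' \<in> set_pmf (mut n x)"
    and P'eq: "P' = update (OneMinMax n) P s'" using P' by (auto simp: step_set)
  have xP: "x \<in> P" using x set_NMUAR[OF finP Pne] by blast
  have ls': "length s' = n" using mut_len[OF mut n1 len[OF xP] s'] .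
  have P'e: "P' = insert s' {z\<in>P. cnt z \<noteq> cnt s'}" using P'eq update_OMM by simp
  have "Inv n P'"
    unfolding Inv_def P'e using finP len ls' inj by (auto simp: inj_on_def)
  moreover have "mut = semo_mut \<longrightarrow> Intv (cnt ` P')"
  proof
    assume sm: "mut = semo_mut"
    have "cnt s' = cnt x + 1 \<or> cnt s' + 1 = cnt x" using semo_set[of n x s'] sm n1 len[OF xP] s' by simp
    moreover have "Intv (cnt ` P)" using J sm by (simp add: Jinv_def)
    ultimately have "Intv (insert (cnt s') (cnt ` P))" using xP by (intro Intv_insert[of _ "cnt x"]) auto
    thus "Intv (cnt ` P')" using P'eq cnt_update by simp
  qed
  ultimately show ?thesis by (simp add: Jinv_def)
qed

lemma covers_iff:
  assumes "\<And>x. x \<in> P \<Longrightarrow> length x = n"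
  shows "covers_front n P \<longleftrightarrow> cnt ` P = {..n}"
proof -
  let ?g = "\<lambda>c::nat. (real c, real n - real c)"
  have inj: "inj ?g" by (auto simp: inj_def)
  have "OneMinMax n ` P = ?g ` (cnt ` P)" by (auto simp: OneMinMax_def image_image)
  moreover have "pareto_front_OMM n = ?g ` {..n}" by (auto simp: pareto_front_OMM_def)
  ultimately show ?thesis unfolding covers_front_def using inj by (simp add: inj_image_eq_iff)
qed

definition Phi :: "nat \<Rightarrow> pop \<Rightarrow> ennreal" where
  "Phi n P = ennreal (288 * real n * harm (n + 1 - card (cnt ` P)))"

lemma integral_step:
  "(\<integral>\<^sup>+P'. F P' \<partial>measure_pmf (stp n mut D P)) =
   (\<integral>\<^sup>+x. (\<integral>\<^sup>+s'. F (update (OneMinMax n) P s') \<partial>measure_pmf (mut n x)) \<partial>measure_pmf (NMUAR (D (OneMinMax n)) P))"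
  by (simp add: semo_step_def nn_integral_bind_pmf nn_integral_map_pmf)

lemma drift_state:
  assumes J: "Jinv n mut P" and n4: "n \<ge> 4" and mut: "is_mut mut" and gD: "goodD D"
  shows "(\<integral>\<^sup>+P'. Phi n P' \<partial>measure_pmf (stp n mut D P)) + (if covers_front n P then 0 else 1) \<le> Phi n P"
proof -
  let ?S = "cnt ` P" and ?N = "NMUAR (D (OneMinMax n)) P"
  have inv: "Inv n P" using J by (simp add: Jinv_def)
  hence finP: "finite P" and Pne: "P \<noteq> {}" and len: "\<And>x. x \<in> P \<Longrightarrow> length x = n" and inj: "inj_on cnt P"
    by (auto simp: Inv_def)
  have finS: "finite ?S" using finP by simp
  have Sn: "?S \<subseteq> {..n}" using len cnt_le by fastforce
  have kle: "card ?S \<le> n + 1" using card_mono[OF _ Sn] by simp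
  have Nsup: "\<And>x. x \<in> set_pmf ?N \<Longrightarrow> x \<in> P" using set_NMUAR[OF finP Pne] by blast
  have slen: "\<And>x s'. x \<in> set_pmf ?N \<Longrightarrow> s' \<in> set_pmf (mut n x) \<Longrightarrow> length s' = n"
    using mut_len[OF mut] n4 len Nsup by (metis le_trans one_le_numeral)
  have cardU: "card (cnt ` update (OneMinMax n) P s') = (if cnt s' \<in> ?S then card ?S else card ?S + 1)" for s'
    using finS by (simp add: cnt_update card_insert_if)
  show ?thesis
  proof (cases "covers_front n P")
    case True
    hence Seq: "?S = {..n}" using covers_iff[OF len] by simp
    have "(\<integral>\<^sup>+P'. Phi n P' \<partial>measure_pmf (stp n mut D P)) =
      (\<integral>\<^sup>+x. (\<integral>\<^sup>+s'. Phi n (update (OneMinMax n) P s') \<partial>measure_pmf (mut n x)) \<partial>measure_pmf ?N)"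
      by (rule integral_step)
    also have "\<dots> = (\<integral>\<^sup>+x. (\<integral>\<^sup>+s'. Phi n P \<partial>measure_pmf (mut n x)) \<partial>measure_pmf ?N)"
    proof (intro nn_integral_cong_AE AE_pmfI)
      fix x s' assume x: "x \<in> set_pmf ?N" and s': "s' \<in> set_pmf (mut n x)"
      have "cnt s' \<le> n" using slen[OF x s'] cnt_le by metis
      hence "cnt s' \<in> ?S" using Seq by auto
      thus "Phi n (update (OneMinMax n) P s') = Phi n P" using cardU[of s'] by (simp add: Phi_def)
    qed
    also have "\<dots> = Phi n P" by (simp add: measure_pmf.emeasure_space_1)
    finally show ?thesis using True by simp
  next
    case False
    hence Sne: "?S \<noteq> {..n}" using covers_iff[OF len] by simp
    have klt: "card ?S < n + 1"
    proof (rule ccontr)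
      assume "\<not> card ?S < n + 1"
      hence "card ?S = card {..n}" using kle by simp
      hence "?S = {..n}" using card_subset_eq[OF _ Sn] by simp
      thus False using Sne by simp
    qed
    define m where "m = n + 1 - card ?S"
    have m1: "m \<ge> 1" using klt by (simp add: m_def)
    define c0 where "c0 = ennreal (288 * real n / real m)"
    define E where "E = {s'. cnt s' \<notin> ?S}"
    have key: "Phi n (update (OneMinMax n) P s') + c0 * indicator E s' = Phi n P" for s'
    proof (cases "cnt s' \<in> ?S")
      case True
      then show ?thesis using cardU[of s'] by (simp add: Phi_def E_def)
    next
      case F: False
      have mm: "n + 1 - (card ?S + 1) = m - 1" by (simp add: m_def)
      have hm: "harm m = harm (m - 1) + 1 / real m"
        using harm_Suc[of "m - 1"] m1 by (simp add: inverse_eq_divide)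
      have "Phi n (update (OneMinMax n) P s') = ennreal (288 * real n * harm (m - 1))"
        using cardU[of s'] F mm by (simp add: Phi_def)
      moreover have "Phi n P = ennreal (288 * real n * harm (m - 1) + 288 * real n / real m)"
      proof -
        have "Phi n P = ennreal (288 * real n * harm m)" unfolding Phi_def m_def by simp
        moreover have "288 * real n * harm m = 288 * real n * harm (m - 1) + 288 * real n / real m"
          unfolding hm by (simp add: distrib_left)
        ultimately show ?thesis by simp
      qed
      moreover have "ennreal (288 * real n * harm (m - 1) + 288 * real n / real m) =
          ennreal (288 * real n * harm (m - 1)) + ennreal (288 * real n / real m)"
        by (intro ennreal_plus) (auto intro!: mult_nonneg_nonneg harm_nonneg)
      ultimately show ?thesis using F by (simp add: c0_def E_def)
    qed
    have inner: "(\<integral>\<^sup>+s'. Phi n (update (OneMinMax n) P s') \<partial>measure_pmf (mut n x)) +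
                 c0 * ennreal (measure_pmf.prob (mut n x) E) = Phi n P" for x
    proof -
      have "(\<integral>\<^sup>+s'. Phi n (update (OneMinMax n) P s') \<partial>measure_pmf (mut n x)) +
                 c0 * ennreal (measure_pmf.prob (mut n x) E) =
            (\<integral>\<^sup>+s'. Phi n (update (OneMinMax n) P s') \<partial>measure_pmf (mut n x)) +
                 (\<integral>\<^sup>+s'. c0 * indicator E s' \<partial>measure_pmf (mut n x))"
        by (simp add: nn_integral_cmult measure_pmf.emeasure_eq_measure)
      also have "\<dots> = (\<integral>\<^sup>+s'. Phi n (update (OneMinMax n) P s') + c0 * indicator E s' \<partial>measure_pmf (mut n x))"
        by (rule nn_integral_add[symmetric]) simp_all
      also have "\<dots> = (\<integral>\<^sup>+s'. Phi n P \<partial>measure_pmf (mut n x))" using key by simp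
      also have "\<dots> = Phi n P" by (simp add: measure_pmf.emeasure_space_1)
      finally show ?thesis .
    qed
    have prog: "ennreal (real m / (288 * real n)) \<le> (\<integral>\<^sup>+x. ennreal (measure_pmf.prob (mut n x) E) \<partial>measure_pmf ?N)"
    proof -
      have iv: "mut = semo_mut \<longrightarrow> Intv ?S" using J by (simp add: Jinv_def)
      show ?thesis using progress[OF inv klt n4 mut gD iv] by (simp add: m_def E_def)
    qed
    have "(\<integral>\<^sup>+P'. Phi n P' \<partial>measure_pmf (stp n mut D P)) + c0 * (\<integral>\<^sup>+x. ennreal (measure_pmf.prob (mut n x) E) \<partial>measure_pmf ?N) =
      (\<integral>\<^sup>+x. (\<integral>\<^sup>+s'. Phi n (update (OneMinMax n) P s') \<partial>measure_pmf (mut n x)) \<partial>measure_pmf ?N) +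
      (\<integral>\<^sup>+x. c0 * ennreal (measure_pmf.prob (mut n x) E) \<partial>measure_pmf ?N)"
      by (simp add: integral_step nn_integral_cmult)
    also have "\<dots> = (\<integral>\<^sup>+x. (\<integral>\<^sup>+s'. Phi n (update (OneMinMax n) P s') \<partial>measure_pmf (mut n x)) + c0 * ennreal (measure_pmf.prob (mut n x) E) \<partial>measure_pmf ?N)"
      by (rule nn_integral_add[symmetric]) simp_all
    also have "\<dots> = (\<integral>\<^sup>+x. Phi n P \<partial>measure_pmf ?N)" using inner by simp
    also have "\<dots> = Phi n P" by (simp add: measure_pmf.emeasure_space_1)
    finally have eq: "(\<integral>\<^sup>+P'. Phi n P' \<partial>measure_pmf (stp n mut D P)) + c0 * (\<integral>\<^sup>+x. ennreal (measure_pmf.prob (mut n x) E) \<partial>measure_pmf ?N) = Phi n P" .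
    have "1 \<le> c0 * ennreal (real m / (288 * real n))"
    proof -
      have "c0 * ennreal (real m / (288 * real n)) = ennreal (288 * real n / real m * (real m / (288 * real n)))"
        by (simp add: c0_def ennreal_mult[symmetric])
      also have "288 * real n / real m * (real m / (288 * real n)) = 1" using m1 n4 by simp
      finally show ?thesis by simp
    qed
    also have "\<dots> \<le> c0 * (\<integral>\<^sup>+x. ennreal (measure_pmf.prob (mut n x) E) \<partial>measure_pmf ?N)"
      using prog by (rule mult_left_mono) simp
    finally have one: "1 \<le> c0 * (\<integral>\<^sup>+x. ennreal (measure_pmf.prob (mut n x) E) \<partial>measure_pmf ?N)" .
    have "(\<integral>\<^sup>+P'. Phi n P' \<partial>measure_pmf (stp n mut D P)) + 1 \<le> Phi n P"
      using add_left_mono[OF one, of "(\<integral>\<^sup>+P'. Phi n P' \<partial>measure_pmf (stp n mut D P))"] eq by simp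
    thus ?thesis using False by simp
  qed
qed

definition mu :: "nat \<Rightarrow> (nat \<Rightarrow> indiv \<Rightarrow> indiv pmf) \<Rightarrow> (objf \<Rightarrow> pop \<Rightarrow> indiv \<Rightarrow> ereal) \<Rightarrow> nat \<Rightarrow> pop pmf" where
  "mu n mut D t = map_pmf last (trajectory n mut D t)"

lemma mu_Suc: "mu n mut D (Suc t) = bind_pmf (mu n mut D t) (stp n mut D)"
proof -
  have "mu n mut D (Suc t) = bind_pmf (trajectory n mut D t) (\<lambda>ps. map_pmf last (map_pmf (\<lambda>P'. ps @ [P']) (stp n mut D (last ps))))"
    by (simp add: mu_def map_bind_pmf)
  also have "\<dots> = bind_pmf (trajectory n mut D t) (\<lambda>ps. stp n mut D (last ps))"
    by (simp add: pmf.map_comp o_def)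
  also have "\<dots> = bind_pmf (mu n mut D t) (stp n mut D)"
    by (simp add: mu_def bind_map_pmf)
  finally show ?thesis .
qed

lemma mu_0: "mu n mut D 0 = map_pmf (\<lambda>s. {s}) (pmf_of_set {xs. length xs = n})"
  by (simp add: mu_def pmf.map_comp o_def)

lemma lists_fin: "finite {xs :: bool list. length xs = n}" and lists_ne: "{xs :: bool list. length xs = n} \<noteq> {}"
proof -
  show "finite {xs :: bool list. length xs = n}" using finite_lists_length_eq[of "UNIV :: bool set" n] by simp
  show "{xs :: bool list. length xs = n} \<noteq> {}" using length_replicate[of n False] by blast
qed

lemma traj_ne: "ps \<in> set_pmf (trajectory n mut D t) \<Longrightarrow> ps \<noteq> []"
  by (induction t arbitrary: ps) (auto simp: set_pmf_of_set[OF lists_ne lists_fin])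

lemma mu_J:
  assumes mut: "is_mut mut" and n1: "n \<ge> 1"
  shows "P \<in> set_pmf (mu n mut D t) \<Longrightarrow> Jinv n mut P"
proof (induction t arbitrary: P)
  case 0
  then obtain s where s: "length s = n" "P = {s}"
    by (auto simp: mu_0 set_pmf_of_set[OF lists_ne lists_fin])
  then show ?case by (auto simp: Jinv_def Inv_def Intv_def)
next
  case (Suc t)
  then obtain Q where Q: "Q \<in> set_pmf (mu n mut D t)" "P \<in> set_pmf (stp n mut D Q)"
    by (auto simp: mu_Suc)
  show ?case by (rule Jinv_step[where D = D, OF Suc.IH[OF Q(1)] mut n1 Q(2)])
qed

definition Fpot where "Fpot n mut D t = (\<integral>\<^sup>+P. Phi n P \<partial>measure_pmf (mu n mut D t))"

lemma chain_step:
  assumes mut: "is_mut mut" and n4: "n \<ge> 4" and gD: "goodD D"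
  shows "Fpot n mut D (Suc t) + ennreal (measure_pmf.prob (mu n mut D t) {P. \<not> covers_front n P}) \<le> Fpot n mut D t"
proof -
  let ?M = "mu n mut D t"
  have "ennreal (measure_pmf.prob ?M {P. \<not> covers_front n P}) = (\<integral>\<^sup>+P. indicator {P. \<not> covers_front n P} P \<partial>measure_pmf ?M)"
    by (simp add: measure_pmf.emeasure_eq_measure)
  also have "\<dots> = (\<integral>\<^sup>+P. (if covers_front n P then 0 else 1) \<partial>measure_pmf ?M)"
    by (intro nn_integral_cong) (auto simp: indicator_def)
  finally have e: "ennreal (measure_pmf.prob ?M {P. \<not> covers_front n P}) = (\<integral>\<^sup>+P. (if covers_front n P then 0 else 1) \<partial>measure_pmf ?M)" .
  have "Fpot n mut D (Suc t) + ennreal (measure_pmf.prob ?M {P. \<not> covers_front n P}) =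
        (\<integral>\<^sup>+P. (\<integral>\<^sup>+P'. Phi n P' \<partial>measure_pmf (stp n mut D P)) \<partial>measure_pmf ?M) +
        (\<integral>\<^sup>+P. (if covers_front n P then 0 else 1) \<partial>measure_pmf ?M)"
    unfolding Fpot_def mu_Suc e by (simp add: nn_integral_bind_pmf)
  also have "\<dots> = (\<integral>\<^sup>+P. (\<integral>\<^sup>+P'. Phi n P' \<partial>measure_pmf (stp n mut D P)) + (if covers_front n P then 0 else 1) \<partial>measure_pmf ?M)"
    by (rule nn_integral_add[symmetric]) simp_all
  also have "\<dots> \<le> (\<integral>\<^sup>+P. Phi n P \<partial>measure_pmf ?M)"
  proof (intro nn_integral_mono_AE AE_pmfI)
    fix P assume "P \<in> set_pmf ?M"
    hence "Jinv n mut P" using mu_J[OF mut] n4 by simp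
    thus "(\<integral>\<^sup>+P'. Phi n P' \<partial>measure_pmf (stp n mut D P)) + (if covers_front n P then 0 else 1) \<le> Phi n P"
      by (rule drift_state[OF _ n4 mut gD])
  qed
  finally show ?thesis by (simp add: Fpot_def)
qed

lemma chain_sum:
  assumes mut: "is_mut mut" and n4: "n \<ge> 4" and gD: "goodD D"
  shows "(\<Sum>t<T. ennreal (measure_pmf.prob (mu n mut D t) {P. \<not> covers_front n P})) + Fpot n mut D T \<le> Fpot n mut D 0"
proof (induction T)
  case 0 then show ?case by simp
next
  case (Suc T)
  have "(\<Sum>t<Suc T. ennreal (measure_pmf.prob (mu n mut D t) {P. \<not> covers_front n P})) + Fpot n mut D (Suc T) =
        (\<Sum>t<T. ennreal (measure_pmf.prob (mu n mut D t) {P. \<not> covers_front n P})) +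
        (Fpot n mut D (Suc T) + ennreal (measure_pmf.prob (mu n mut D T) {P. \<not> covers_front n P}))"
    by (simp add: algebra_simps)
  also have "\<dots> \<le> (\<Sum>t<T. ennreal (measure_pmf.prob (mu n mut D t) {P. \<not> covers_front n P})) + Fpot n mut D T"
    by (intro add_left_mono chain_step[OF mut n4 gD])
  also have "\<dots> \<le> Fpot n mut D 0" by (rule Suc.IH)
  finally show ?case .
qed

lemma Fpot0: "Fpot n mut D 0 = ennreal (288 * real n * harm n)"
proof -
  have "Fpot n mut D 0 = (\<integral>\<^sup>+s. Phi n {s} \<partial>measure_pmf (pmf_of_set {xs :: bool list. length xs = n}))"
    by (simp add: Fpot_def mu_0 nn_integral_map_pmf)
  also have "\<dots> = (\<integral>\<^sup>+s. ennreal (288 * real n * harm n) \<partial>measure_pmf (pmf_of_set {xs :: bool list. length xs = n}))"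
    by (simp add: Phi_def)
  also have "\<dots> = ennreal (288 * real n * harm n)" by (simp add: measure_pmf.emeasure_space_1)
  finally show ?thesis .
qed

lemma exp_time_bound:
  assumes mut: "is_mut mut" and n4: "n \<ge> 4" and gD: "goodD D"
  shows "expected_time n mut D \<le> ennreal (288 * real n * harm n)"
proof -
  have tm: "ennreal (measure_pmf.prob (trajectory n mut D t) {ps. \<forall>P\<in>set ps. \<not> covers_front n P}) \<le>
              ennreal (measure_pmf.prob (mu n mut D t) {P. \<not> covers_front n P})" for t
  proof (intro ennreal_leI)
    have "measure_pmf.prob (trajectory n mut D t) {ps. \<forall>P\<in>set ps. \<not> covers_front n P} \<le>
          measure_pmf.prob (trajectory n mut D t) {ps. \<not> covers_front n (last ps)}"
    proof (rule measure_pmf.finite_measure_mono_AE)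
      show "AE ps in measure_pmf (trajectory n mut D t). ps \<in> {ps. \<forall>P\<in>set ps. \<not> covers_front n P} \<longrightarrow> ps \<in> {ps. \<not> covers_front n (last ps)}"
        using traj_ne by (intro AE_pmfI) (auto dest!: traj_ne)
    qed simp
    also have "\<dots> = measure_pmf.prob (mu n mut D t) {P. \<not> covers_front n P}"
      by (simp add: mu_def measure_map_pmf vimage_def)
    finally show "measure_pmf.prob (trajectory n mut D t) {ps. \<forall>P\<in>set ps. \<not> covers_front n P} \<le>
          measure_pmf.prob (mu n mut D t) {P. \<not> covers_front n P}" .
  qed
  have "expected_time n mut D \<le> (\<Sum>t. ennreal (measure_pmf.prob (mu n mut D t) {P. \<not> covers_front n P}))"
    unfolding expected_time_def by (intro suminf_le tm summableI)
  also have "\<dots> \<le> Fpot n mut D 0"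
  proof (rule suminf_le_const[OF summableI])
    fix T
    show "(\<Sum>t<T. ennreal (measure_pmf.prob (mu n mut D t) {P. \<not> covers_front n P})) \<le> Fpot n mut D 0"
      using chain_sum[OF mut n4 gD, of T] by (rule order_trans[rotated]) simp
  qed
  finally show ?thesis by (simp add: Fpot0)
qed

lemma harm_bound:
  assumes "n \<ge> 4"
  shows "288 * real n * harm n \<le> 576 * real n * ln (real n)"
proof -
  have "harm n - ln (real n) \<le> harm 1 - ln (real (1::nat))"
    using euler_mascheroni_sequence_decreasing[of 1 n] assms by simp
  hence h: "harm n \<le> 1 + ln (real n)" by (simp add: harm_expand)
  have "exp 1 < (4::real)" using e_less_272 by simp
  hence "1 < ln (4::real)" using ln_less_cancel_iff[of "exp 1" 4] by simp
  moreover have "ln (4::real) \<le> ln (real n)" using assms by simp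
  ultimately have "1 \<le> ln (real n)" by simp
  hence "harm n \<le> 2 * ln (real n)" using h by simp
  hence "288 * real n * harm n \<le> 288 * real n * (2 * ln (real n))"
    using assms by (intro mult_left_mono) auto
  thus ?thesis by simp
qed

theorem theorem8:
  shows "(\<forall>mut\<in>{semo_mut, gsemo_mut}.
            (\<exists>C N. \<forall>n\<ge>N. expected_time n mut CDC \<le> ennreal (C * real n * ln (real n)))
          \<and> (\<forall>r::real. r \<ge> 1 \<longrightarrow>
            (\<exists>C N. \<forall>n\<ge>N. expected_time n mut (HVC (-r, -r)) \<le> ennreal (C * real n * ln (real n)))))"
proof (intro ballI conjI allI impI)
  fix mut assume "mut \<in> {semo_mut, gsemo_mut}"
  hence mut: "is_mut mut" by (auto simp: is_mut_def)
  have gen: "\<exists>C N. \<forall>n\<ge>N. expected_time n mut D \<le> ennreal (C * real n * ln (real n))" if gD: "goodD D" for D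
  proof (intro exI allI impI)
    fix n :: nat assume n4: "4 \<le> n"
    have "expected_time n mut D \<le> ennreal (288 * real n * harm n)" by (rule exp_time_bound[OF mut n4 gD])
    also have "\<dots> \<le> ennreal (576 * real n * ln (real n))" by (intro ennreal_leI harm_bound n4)
    finally show "expected_time n mut D \<le> ennreal (576 * real n * ln (real n))" .
  qed
  show "\<exists>C N. \<forall>n\<ge>N. expected_time n mut CDC \<le> ennreal (C * real n * ln (real n))"
    by (rule gen) (simp add: goodD_def)
  fix r :: real assume "r \<ge> 1"
  show "\<exists>C N. \<forall>n\<ge>N. expected_time n mut (HVC (-r, -r)) \<le> ennreal (C * real n * ln (real n))"
    by (rule gen) (use \<open>r \<ge> 1\<close> in \<open>auto simp: goodD_def\<close>)
qed

end
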